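(* Let $X\sim\mathcal N(\mu,\sigma^2)$ on $\mathcal X=\mathbb R$ with $\sigma>0$, and take the squared distortion $\Delta(x,\hat x)=(x-\hat x)^2$. Define $$\phi(D):=\inf_{p_{\hat X|X}}\{I(X;\hat X):\mathbb E[(X-\hat X)^2]\le D,\ p_{\hat X}=p_X\}.$$ Define $\varphi(D)$ as the infimum of $\max\{I(X;U),I(\hat X;U)\}$ over Polish spaces $\mathcal U$ and kernels $p_{U\hat X|X}$ with $\hat X\in\mathbb R$, subject to: - $\mathbb E[(X-\hat X)^2]\le D$; - $X\leftrightarrow U\leftrightarrow\hat X$ is a Markov chain; - $p_{\hat X}=p_X$. Then for $D\in[0,2\sigma^2)$, $$\phi(D)=\tfrac12\log\frac{4\sigma^4}{4\sigma^2D-D^2}\qquad\text{and}\qquad\varphi(D)=\tfrac12\log\frac{2\sigma^2}{D},$$ both interpreted as $+\infty$ at $D=0$. For $D\ge2\sigma^2$, $\phi(D)=\varphi(D)=0$.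
   Context: Logarithms are base 2. *)

theory Defs
  imports "HOL-Probability.Probability"
begin

definition Polish_space :: "'a topology \<Rightarrow> bool" where
  "Polish_space X \<longleftrightarrow> completely_metrizable_space X \<and> separable_space X"

definition borel_of :: "'a topology \<Rightarrow> 'a measure" where
  "borel_of X = sigma (topspace X) {U. openin X U}"

(* For probability measures P << Q with f = dP/dQ,
   D(P||Q) = int f log2 f dQ = int (f ln f - f + 1)/ln 2 dQ  (nonnegative integrand). *)
definition KL_div :: "'a measure \<Rightarrow> 'a measure \<Rightarrow> ennreal" where
  "KL_div P Q =
    (if sets P = sets Q \<and> absolutely_continuous Q P
     then \<integral>\<^sup>+ x. ennreal (let t = enn2real (RN_deriv Q P x) in (t * ln t - t + 1) / ln 2) \<partial>Q
     else \<infinity>)"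

definition mutual_info :: "'a measure \<Rightarrow> 'b measure \<Rightarrow> ('a \<times> 'b) measure \<Rightarrow> ennreal" where
  "mutual_info A B J = KL_div J (distr J A fst \<Otimes>\<^sub>M distr J B snd)"

(* Gaussian law N(mu, sigma^2) on the real line (sigma is the standard deviation) *)
definition gaussian :: "real \<Rightarrow> real \<Rightarrow> real measure" where
  "gaussian \<mu> \<sigma> = density lborel (\<lambda>x. ennreal (normal_density \<mu> \<sigma> x))"

(* Markov chain X -- U -- Y for a joint law P of (X,U,Y) on A x (B x C):
   the conditional law of Y given (X,U) depends only on U. *)
definition markov_chain :: "'a measure \<Rightarrow> 'b measure \<Rightarrow> 'c measure \<Rightarrow> ('a \<times> 'b \<times> 'c) measure \<Rightarrow> bool" where
  "markov_chain A B C P \<longleftrightarrow>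
    (\<exists>q \<in> B \<rightarrow>\<^sub>M prob_algebra C.
       P = distr P (A \<Otimes>\<^sub>M B) (\<lambda>(x,u,y). (x,u)) \<bind>
             (\<lambda>(x,u). distr (q u) (A \<Otimes>\<^sub>M (B \<Otimes>\<^sub>M C)) (\<lambda>y. (x,u,y))))"

definition phi :: "real \<Rightarrow> real \<Rightarrow> real \<Rightarrow> ennreal" where
  "phi \<mu> \<sigma> D =
    (INF K \<in> {K. K \<in> borel \<rightarrow>\<^sub>M prob_algebra (borel :: real measure) \<and>
             (let P = gaussian \<mu> \<sigma> \<bind> (\<lambda>x. distr (K x) (borel \<Otimes>\<^sub>M borel) (\<lambda>y. (x, y))) in
                (\<integral>\<^sup>+ z. ennreal ((fst z - snd z)\<^sup>2) \<partial>P) \<le> ennreal D \<and>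
                distr P borel snd = gaussian \<mu> \<sigma>)}.
       mutual_info borel borel
         (gaussian \<mu> \<sigma> \<bind> (\<lambda>x. distr (K x) (borel \<Otimes>\<^sub>M borel) (\<lambda>y. (x, y)))))"

definition joint3 :: "real \<Rightarrow> real \<Rightarrow> 'u topology \<Rightarrow> (real \<Rightarrow> ('u \<times> real) measure) \<Rightarrow> (real \<times> 'u \<times> real) measure" where
  "joint3 \<mu> \<sigma> T K = gaussian \<mu> \<sigma> \<bind>
      (\<lambda>x. distr (K x) (borel \<Otimes>\<^sub>M (borel_of T \<Otimes>\<^sub>M borel)) (\<lambda>(u, y). (x, u, y)))"

(* varphi(D): inf of max{I(X;U), I(Xhat;U)} over Polish spaces U (topologies on a subset of
   the reals, which up to homeomorphism covers every Polish space since |U| <= continuum)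
   and kernels p_{U Xhat|X} with E(X-Xhat)^2 <= D, X -- U -- Xhat Markov, p_Xhat = p_X *)
definition varphi :: "real \<Rightarrow> real \<Rightarrow> real \<Rightarrow> ennreal" where
  "varphi \<mu> \<sigma> D =
    (INF TK \<in> {(T :: real topology, K). Polish_space T \<and>
               K \<in> borel \<rightarrow>\<^sub>M prob_algebra (borel_of T \<Otimes>\<^sub>M (borel :: real measure)) \<and>
               (\<integral>\<^sup>+ z. ennreal ((fst z - snd (snd z))\<^sup>2) \<partial>(joint3 \<mu> \<sigma> T K)) \<le> ennreal D \<and>
               markov_chain borel (borel_of T) borel (joint3 \<mu> \<sigma> T K) \<and>
               distr (joint3 \<mu> \<sigma> T K) borel (\<lambda>z. snd (snd z)) = gaussian \<mu> \<sigma>}.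
       max (mutual_info borel (borel_of (fst TK))
              (distr (joint3 \<mu> \<sigma> (fst TK) (snd TK)) (borel \<Otimes>\<^sub>M borel_of (fst TK)) (\<lambda>z. (fst z, fst (snd z)))))
           (mutual_info borel (borel_of (fst TK))
              (distr (joint3 \<mu> \<sigma> (fst TK) (snd TK)) (borel \<Otimes>\<^sub>M borel_of (fst TK)) (\<lambda>z. (snd (snd z), fst (snd z))))))"

end

theory Submission
  imports Defs
begin


lemma gaussian_prob: "\<sigma> > 0 \<Longrightarrow> prob_space (gaussian \<mu> \<sigma>)"
  unfolding gaussian_def by (rule prob_space_normal_density)

lemma sets_gaussian[simp, measurable_cong]: "sets (gaussian \<mu> \<sigma>) = sets borel"
  unfolding gaussian_def by simp

lemma space_gaussian[simp]: "space (gaussian \<mu> \<sigma>) = UNIV"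
  unfolding gaussian_def by simp

lemma nn_integral_gaussian:
  "f \<in> borel_measurable borel \<Longrightarrow>
   (\<integral>\<^sup>+y. f y \<partial>gaussian m s) = (\<integral>\<^sup>+y. ennreal (normal_density m s y) * f y \<partial>lborel)"
  unfolding gaussian_def by (subst nn_integral_density) auto

lemma gauss_sq_integral:
  assumes "s > 0"
  shows "has_bochner_integral lborel (\<lambda>y. normal_density m s y * (\<alpha> + \<beta>*y)\<^sup>2) ((\<alpha>+\<beta>*m)\<^sup>2 + \<beta>\<^sup>2 * s\<^sup>2)"
proof -
  have e0: "has_bochner_integral lborel (\<lambda>x. normal_density m s x * (x - m) ^ (2 * 0)) 1"
    using normal_moment_even[OF assms, of m 0] by simp
  have e1: "has_bochner_integral lborel (\<lambda>x. normal_density m s x * (x - m) ^ (2 * 0 + 1)) 0"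
    using normal_moment_odd[OF assms, of m 0] by simp
  have e2: "has_bochner_integral lborel (\<lambda>x. normal_density m s x * (x - m) ^ (2 * 1)) (s\<^sup>2)"
    using normal_moment_even[OF assms, of m 1] by (simp add: field_simps)
  have "has_bochner_integral lborel (\<lambda>x. (\<alpha>+\<beta>*m)\<^sup>2 * (normal_density m s x * (x - m) ^ (2 * 0))
     + (2*(\<alpha>+\<beta>*m)*\<beta>) * (normal_density m s x * (x - m) ^ (2 * 0 + 1))
     + \<beta>\<^sup>2 * (normal_density m s x * (x - m) ^ (2 * 1))) ((\<alpha>+\<beta>*m)\<^sup>2 * 1 + (2*(\<alpha>+\<beta>*m)*\<beta>) * 0 + \<beta>\<^sup>2 * s\<^sup>2)"
    by (intro has_bochner_integral_add has_bochner_integral_mult_right e0 e1 e2)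
  moreover have "(\<lambda>x. (\<alpha>+\<beta>*m)\<^sup>2 * (normal_density m s x * (x - m) ^ (2 * 0))
     + (2*(\<alpha>+\<beta>*m)*\<beta>) * (normal_density m s x * (x - m) ^ (2 * 0 + 1))
     + \<beta>\<^sup>2 * (normal_density m s x * (x - m) ^ (2 * 1))) = (\<lambda>y. normal_density m s y * (\<alpha> + \<beta>*y)\<^sup>2)"
    by (auto simp: fun_eq_iff power2_eq_square algebra_simps)
  ultimately show ?thesis by simp
qed

lemma nn_integral_gauss_sq:
  assumes "s > 0"
  shows "(\<integral>\<^sup>+y. ennreal ((\<alpha> + \<beta>*y)\<^sup>2) \<partial>gaussian m s) = ennreal ((\<alpha>+\<beta>*m)\<^sup>2 + \<beta>\<^sup>2 * s\<^sup>2)"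
proof -
  have "(\<integral>\<^sup>+y. ennreal ((\<alpha> + \<beta>*y)\<^sup>2) \<partial>gaussian m s) =
     (\<integral>\<^sup>+y. ennreal (normal_density m s y * (\<alpha> + \<beta>*y)\<^sup>2) \<partial>lborel)"
    by (subst nn_integral_gaussian) (auto simp: ennreal_mult)
  also have "\<dots> = ennreal ((\<alpha>+\<beta>*m)\<^sup>2 + \<beta>\<^sup>2 * s\<^sup>2)"
    using gauss_sq_integral[OF assms, of m \<alpha> \<beta>]
    by (subst nn_integral_eq_integral) (auto simp: has_bochner_integral_iff)
  finally show ?thesis .
qed


lemma young_ln:
  fixes t g :: real assumes "t \<ge> 0"
  shows "t * g - exp g + 1 \<le> t * ln t - t + 1"
proof (cases "t = 0")
  case True then show ?thesis by simp
next
  case False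
  then have tp: "t > 0" using assms by simp
  have "exp g = t * exp (g - ln t)" using tp by (simp add: exp_diff)
  also have "t * exp (g - ln t) \<ge> t * (1 + (g - ln t))"
    using tp exp_ge_add_one_self[of "g - ln t"] by (intro mult_left_mono) auto
  finally show ?thesis by (simp add: algebra_simps)
qed

lemma ennreal_integral_le_nn:
  fixes f :: "'a \<Rightarrow> real"
  assumes "integrable M f"
  shows "ennreal (integral\<^sup>L M f) \<le> (\<integral>\<^sup>+x. ennreal (f x) \<partial>M)"
proof -
  have i: "integrable M (\<lambda>x. max (f x) 0)" using assms by auto
  have "integral\<^sup>L M f \<le> integral\<^sup>L M (\<lambda>x. max (f x) 0)"
    using assms i by (intro integral_mono) auto
  then have "ennreal (integral\<^sup>L M f) \<le> ennreal (integral\<^sup>L M (\<lambda>x. max (f x) 0))"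
    by (rule ennreal_leI)
  also have "\<dots> = (\<integral>\<^sup>+x. ennreal (max (f x) 0) \<partial>M)"
    using i by (subst nn_integral_eq_integral) auto
  also have "\<dots> = (\<integral>\<^sup>+x. ennreal (f x) \<partial>M)"
    by (intro nn_integral_cong) (auto simp: max_def ennreal_neg)
  finally show ?thesis .
qed

lemma KL_lower:
  assumes P: "prob_space P" and Q: "prob_space Q" and sPQ: "sets P = sets Q"
    and g[measurable]: "g \<in> borel_measurable Q"
    and intP: "integrable P g"
    and intQ: "integrable Q (\<lambda>x. exp (g x))"
    and one: "(\<integral>x. exp (g x) \<partial>Q) = 1"
  shows "ennreal ((\<integral>x. g x \<partial>P) / ln 2) \<le> KL_div P Q"
proof (cases "absolutely_continuous Q P")
  case False then show ?thesis by (simp add: KL_div_def)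
next
  case ac: True
  interpret Q: prob_space Q by fact
  interpret P: prob_space P by fact
  define r where "r = RN_deriv Q P"
  define t where "t x = enn2real (r x)" for x
  have [measurable]: "r \<in> borel_measurable Q" unfolding r_def by simp
  have [measurable]: "t \<in> borel_measurable Q" unfolding t_def by simp
  have Pd: "density Q r = P" unfolding r_def by (rule Q.density_RN_deriv[OF ac sPQ])
  have fin: "AE x in Q. r x \<noteq> \<infinity>"
    unfolding r_def by (rule Q.RN_deriv_finite[OF _ ac sPQ]) (simp add: P.sigma_finite_measure_axioms)
  have Pd2: "P = density Q (\<lambda>x. ennreal (t x))"
    unfolding Pd[symmetric] t_def using fin
    by (intro density_cong) (auto simp: less_top)
  have tnn: "AE x in Q. 0 \<le> t x" by (simp add: t_def)
  have gm: "g \<in> borel_measurable Q" by simp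
  have int1: "integrable Q (\<lambda>x. t x * g x)"
    using intP unfolding Pd2 by (subst (asm) integrable_density) (auto simp: tnn)
  have eq1: "(\<integral>x. g x \<partial>P) = (\<integral>x. t x * g x \<partial>Q)"
    unfolding Pd2 by (subst integral_density) (auto simp: tnn)
  define phi where "phi x = (t x * g x - exp (g x) + 1) / ln 2" for x
  have intphi: "integrable Q phi" unfolding phi_def
    using int1 intQ by (intro integrable_divide integrable_add integrable_diff) auto
  have "(\<integral>x. phi x \<partial>Q) = ((\<integral>x. t x * g x \<partial>Q) - (\<integral>x. exp (g x) \<partial>Q) + 1) / ln 2"
    unfolding phi_def using int1 intQ by (simp add: Q.prob_space)
  also have "\<dots> = (\<integral>x. g x \<partial>P) / ln 2" using one eq1 by simp
  finally have phieq: "(\<integral>x. phi x \<partial>Q) = (\<integral>x. g x \<partial>P) / ln 2" .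
  have "ennreal ((\<integral>x. g x \<partial>P) / ln 2) \<le> (\<integral>\<^sup>+x. ennreal (phi x) \<partial>Q)"
    unfolding phieq[symmetric] by (rule ennreal_integral_le_nn[OF intphi])
  also have "\<dots> \<le> (\<integral>\<^sup>+x. ennreal ((t x * ln (t x) - t x + 1) / ln 2) \<partial>Q)"
    unfolding phi_def
    by (intro nn_integral_mono ennreal_leI divide_right_mono young_ln) (auto simp: t_def)
  also have "\<dots> = KL_div P Q"
    using ac sPQ by (simp add: KL_div_def t_def r_def Let_def)
  finally show ?thesis .
qed

lemma KL_exact:
  assumes P: "prob_space P" and Q: "prob_space Q"
    and g[measurable]: "g \<in> borel_measurable Q"
    and Pd: "P = density Q (\<lambda>x. ennreal (exp (g x)))"
    and intP: "integrable P g"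
  shows "KL_div P Q = ennreal ((\<integral>x. g x \<partial>P) / ln 2)"
proof -
  interpret Q: prob_space Q by fact
  interpret P: prob_space P by fact
  have sPQ: "sets P = sets Q" using Pd by simp
  have ac: "absolutely_continuous Q P" unfolding Pd by (intro absolutely_continuousI_density) simp
  have ae: "AE x in Q. ennreal (exp (g x)) = RN_deriv Q P x"
    unfolding Pd by (intro Q.RN_deriv_unique) auto
  have ae2: "AE x in Q. enn2real (RN_deriv Q P x) = exp (g x)"
    using ae by eventually_elim (metis enn2real_ennreal exp_ge_zero)
  have intQ1: "integrable Q (\<lambda>x. exp (g x) * g x)"
    using intP unfolding Pd by (subst (asm) integrable_density) auto
  have "prob_space (density Q (\<lambda>x. ennreal (exp (g x))))" using P Pd by simp
  then have "emeasure (density Q (\<lambda>x. ennreal (exp (g x)))) (space Q) = 1"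
    using prob_space.emeasure_space_1[of "density Q _"] by (metis space_density)
  then have nn1: "(\<integral>\<^sup>+x. ennreal (exp (g x)) \<partial>Q) = 1"
    by (simp add: emeasure_density)
  have intQ: "integrable Q (\<lambda>x. exp (g x))"
    using nn1 by (intro integrableI_nonneg) auto
  have one: "(\<integral>x. exp (g x) \<partial>Q) = 1"
    using nn1 intQ by (subst (asm) nn_integral_eq_integral) auto
  have eq1: "(\<integral>x. g x \<partial>P) = (\<integral>x. exp (g x) * g x \<partial>Q)"
    unfolding Pd by (subst integral_density) auto
  define phi where "phi x = (exp (g x) * g x - exp (g x) + 1) / ln 2" for x
  have intphi: "integrable Q phi" unfolding phi_def
    using intQ1 intQ by (intro integrable_divide integrable_add integrable_diff) auto
  have phinn: "0 \<le> phi x" for x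
    using young_ln[of "exp (g x)" 0] unfolding phi_def by simp
  have "(\<integral>x. phi x \<partial>Q) = ((\<integral>x. exp (g x) * g x \<partial>Q) - (\<integral>x. exp (g x) \<partial>Q) + 1) / ln 2"
    unfolding phi_def using intQ1 intQ by (simp add: Q.prob_space)
  also have "\<dots> = (\<integral>x. g x \<partial>P) / ln 2" using one eq1 by simp
  finally have phieq: "(\<integral>x. phi x \<partial>Q) = (\<integral>x. g x \<partial>P) / ln 2" .
  have "KL_div P Q = (\<integral>\<^sup>+x. ennreal ((enn2real (RN_deriv Q P x) * ln (enn2real (RN_deriv Q P x))
        - enn2real (RN_deriv Q P x) + 1) / ln 2) \<partial>Q)"
    using ac sPQ by (simp add: KL_div_def Let_def)
  also have "\<dots> = (\<integral>\<^sup>+x. ennreal (phi x) \<partial>Q)"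
    using ae2 by (intro nn_integral_cong_AE) (auto simp: phi_def)
  also have "\<dots> = ennreal ((\<integral>x. g x \<partial>P) / ln 2)"
    using intphi phinn phieq by (subst nn_integral_eq_integral) auto
  finally show ?thesis .
qed


context
  fixes M :: "'a measure" and A :: "'a measure" and N :: "'b measure" and K :: "'a \<Rightarrow> 'b measure"
  assumes Mp: "prob_space M" and sMA: "sets M = sets A"
    and Km[measurable]: "K \<in> A \<rightarrow>\<^sub>M prob_algebra N"
begin

lemma GB_kernel[measurable]: "(\<lambda>x. distr (K x) (A \<Otimes>\<^sub>M N) (Pair x)) \<in> A \<rightarrow>\<^sub>M prob_algebra (A \<Otimes>\<^sub>M N)"
  by (rule measurable_distr_prob_space2[OF Km]) simp

lemma GB_M_space: "M \<in> space (prob_algebra A)"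
  using Mp sMA by (simp add: space_prob_algebra)

lemma GB_prob: "prob_space (M \<bind> (\<lambda>x. distr (K x) (A \<Otimes>\<^sub>M N) (Pair x)))"
  by (rule prob_space_bind'[OF GB_M_space GB_kernel])

lemma GB_sets: "sets (M \<bind> (\<lambda>x. distr (K x) (A \<Otimes>\<^sub>M N) (Pair x))) = sets (A \<Otimes>\<^sub>M N)"
  by (rule sets_bind'[OF GB_M_space GB_kernel])

lemma GB_K_sets: "x \<in> space A \<Longrightarrow> sets (K x) = sets N"
  using measurable_space[OF Km] by (simp add: space_prob_algebra)

lemma GB_K_prob: "x \<in> space A \<Longrightarrow> prob_space (K x)"
  using measurable_space[OF Km] by (simp add: space_prob_algebra)

lemma GB_nn:
  assumes F[measurable]: "F \<in> borel_measurable (A \<Otimes>\<^sub>M N)"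
  shows "(\<integral>\<^sup>+z. F z \<partial>(M \<bind> (\<lambda>x. distr (K x) (A \<Otimes>\<^sub>M N) (Pair x)))) =
         (\<integral>\<^sup>+x. \<integral>\<^sup>+y. F (x, y) \<partial>K x \<partial>M)"
proof -
  have km: "(\<lambda>x. distr (K x) (A \<Otimes>\<^sub>M N) (Pair x)) \<in> M \<rightarrow>\<^sub>M subprob_algebra (A \<Otimes>\<^sub>M N)"
    using measurable_prob_algebraD[OF GB_kernel] by (simp cong: measurable_cong_sets add: sMA)
  have "(\<integral>\<^sup>+z. F z \<partial>(M \<bind> (\<lambda>x. distr (K x) (A \<Otimes>\<^sub>M N) (Pair x)))) =
      (\<integral>\<^sup>+x. \<integral>\<^sup>+z. F z \<partial>distr (K x) (A \<Otimes>\<^sub>M N) (Pair x) \<partial>M)"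
    by (rule nn_integral_bind[OF F km])
  also have "\<dots> = (\<integral>\<^sup>+x. \<integral>\<^sup>+y. F (x, y) \<partial>K x \<partial>M)"
  proof (intro nn_integral_cong)
    fix x assume "x \<in> space M"
    then have x: "x \<in> space A" using sMA sets_eq_imp_space_eq by blast
    have "Pair x \<in> K x \<rightarrow>\<^sub>M A \<Otimes>\<^sub>M N"
      using x GB_K_sets[OF x] by (simp cong: measurable_cong_sets)
    then show "(\<integral>\<^sup>+z. F z \<partial>distr (K x) (A \<Otimes>\<^sub>M N) (Pair x)) = (\<integral>\<^sup>+y. F (x, y) \<partial>K x)"
      by (subst nn_integral_distr) auto
  qed
  finally show ?thesis .
qed

lemma GB_fst: "distr (M \<bind> (\<lambda>x. distr (K x) (A \<Otimes>\<^sub>M N) (Pair x))) A fst = M"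
proof (rule measure_eqI)
  show "sets (distr (M \<bind> (\<lambda>x. distr (K x) (A \<Otimes>\<^sub>M N) (Pair x))) A fst) = sets M"
    by (simp add: sMA)
next
  fix X assume X: "X \<in> sets (distr (M \<bind> (\<lambda>x. distr (K x) (A \<Otimes>\<^sub>M N) (Pair x))) A fst)"
  then have X[measurable]: "X \<in> sets A" by simp
  have fm: "fst \<in> (M \<bind> (\<lambda>x. distr (K x) (A \<Otimes>\<^sub>M N) (Pair x))) \<rightarrow>\<^sub>M A"
    by (simp add: GB_sets cong: measurable_cong_sets)
  have "emeasure (distr (M \<bind> (\<lambda>x. distr (K x) (A \<Otimes>\<^sub>M N) (Pair x))) A fst) X =
     (\<integral>\<^sup>+z. indicator X z \<partial>distr (M \<bind> (\<lambda>x. distr (K x) (A \<Otimes>\<^sub>M N) (Pair x))) A fst)"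
    by simp
  also have "\<dots> = (\<integral>\<^sup>+z. indicator X (fst z) \<partial>(M \<bind> (\<lambda>x. distr (K x) (A \<Otimes>\<^sub>M N) (Pair x))))"
    by (rule nn_integral_distr[OF fm]) simp
  also have "\<dots> = (\<integral>\<^sup>+x. \<integral>\<^sup>+y. indicator X x \<partial>K x \<partial>M)"
    by (subst GB_nn) auto
  also have "\<dots> = (\<integral>\<^sup>+x. indicator X x \<partial>M)"
  proof (intro nn_integral_cong)
    fix x assume "x \<in> space M"
    then have x: "x \<in> space A" using sMA sets_eq_imp_space_eq by blast
    interpret prob_space "K x" using GB_K_prob[OF x] .
    show "(\<integral>\<^sup>+y. indicator X x \<partial>K x) = indicator X x" by (simp add: emeasure_space_1)
  qed
  also have "\<dots> = emeasure M X" using X sMA by simp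
  finally show "emeasure (distr (M \<bind> (\<lambda>x. distr (K x) (A \<Otimes>\<^sub>M N) (Pair x))) A fst) X = emeasure M X" .
qed

end


lemma gauss_sq_int:
  assumes "s > 0"
  shows "integrable (gaussian m s) (\<lambda>y. (\<alpha> + \<beta>*y)\<^sup>2)"
    and "(\<integral>y. (\<alpha> + \<beta>*y)\<^sup>2 \<partial>gaussian m s) = (\<alpha>+\<beta>*m)\<^sup>2 + \<beta>\<^sup>2 * s\<^sup>2"
proof -
  show i: "integrable (gaussian m s) (\<lambda>y. (\<alpha> + \<beta>*y)\<^sup>2)"
    using nn_integral_gauss_sq[OF assms, where \<alpha>=\<alpha> and \<beta>=\<beta> and m=m] by (intro integrableI_nonneg) (auto simp del: ennreal_plus simp: top_unique)
  show "(\<integral>y. (\<alpha> + \<beta>*y)\<^sup>2 \<partial>gaussian m s) = (\<alpha>+\<beta>*m)\<^sup>2 + \<beta>\<^sup>2 * s\<^sup>2"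
    using nn_integral_gauss_sq[OF assms, where \<alpha>=\<alpha> and \<beta>=\<beta> and m=m] i
    by (subst (asm) nn_integral_eq_integral) (auto simp del: ennreal_plus)
qed

lemma nn_integral_normal_density_1:
  assumes "s > 0" shows "(\<integral>\<^sup>+x. ennreal (normal_density m s x) \<partial>lborel) = 1"
  using assms by (subst nn_integral_eq_integral) auto

lemma expm: "exp (- c) = 1 / exp (c :: real)"
  by (simp add: exp_minus inverse_eq_divide)

lemma normal_ratio:
  assumes "\<sigma> > 0" "v > 0"
  shows "normal_density \<mu> \<sigma> x * exp (ln \<sigma> - ln (sqrt v) - (x - c)\<^sup>2 / (2 * v) + (x - \<mu>)\<^sup>2 / (2*\<sigma>\<^sup>2))
       = normal_density c (sqrt v) x"
proof -
  define A where "A = (x - c)\<^sup>2 / (2 * v)"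
  define B where "B = (x - \<mu>)\<^sup>2 / (2*\<sigma>\<^sup>2)"
  have e: "exp (ln \<sigma> - ln (sqrt v) - A + B) = (\<sigma> / sqrt v) * exp B / exp A"
    using assms by (simp add: exp_add exp_diff)
  have n1: "normal_density \<mu> \<sigma> x = 1 / (sqrt (2*pi) * \<sigma>) / exp B"
    unfolding normal_density_def B_def using assms by (simp add: real_sqrt_mult expm)
  have n2: "normal_density c (sqrt v) x = 1 / (sqrt (2*pi) * sqrt v) / exp A"
    unfolding normal_density_def A_def using assms by (simp add: real_sqrt_mult expm)
  show ?thesis unfolding A_def[symmetric] B_def[symmetric] e n1 n2
    using assms by (simp add: field_simps)
qed

lemma gauss_MI_lower:
  fixes J :: "(real \<times> 'b) measure" and M :: "'b measure" and m :: "'b \<Rightarrow> real"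
  assumes sp: "\<sigma> > 0" and Jp: "prob_space J" and sJ: "sets J = sets (borel \<Otimes>\<^sub>M M)"
    and J1: "distr J borel fst = gaussian \<mu> \<sigma>"
    and mm[measurable]: "m \<in> borel_measurable M"
    and intE: "integrable J (\<lambda>z. (fst z - m (snd z))\<^sup>2)"
    and vp: "v > 0"
  shows "ennreal ((ln \<sigma> - ln (sqrt v) - (\<integral>z. (fst z - m (snd z))\<^sup>2 \<partial>J) / (2* v) + 1/2) / ln 2)
         \<le> mutual_info borel M J"
proof -
  interpret J: prob_space J by fact
  define J2 where "J2 = distr J M snd"
  have J2p: "prob_space J2" unfolding J2_def
    by (intro J.prob_space_distr) (simp add: sJ cong: measurable_cong_sets)
  interpret J2: prob_space J2 by fact
  interpret G: prob_space "gaussian \<mu> \<sigma>" using gaussian_prob[OF sp] .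
  interpret GJ: pair_sigma_finite "gaussian \<mu> \<sigma>" J2 ..
  define Q where "Q = gaussian \<mu> \<sigma> \<Otimes>\<^sub>M J2"
  have Qeq: "distr J borel fst \<Otimes>\<^sub>M distr J M snd = Q" unfolding Q_def J2_def J1 ..
  have Qp: "prob_space Q" unfolding Q_def by (intro prob_space_pair) (simp_all add: gaussian_prob sp J2p)
  have sQ: "sets Q = sets (borel \<Otimes>\<^sub>M M)" unfolding Q_def
    by (intro sets_pair_measure_cong) (simp_all add: J2_def)
  define g where "g z = ln \<sigma> - ln (sqrt v) - (fst z - m (snd z))\<^sup>2 / (2* v) + (fst z - \<mu>)\<^sup>2 / (2*\<sigma>\<^sup>2)" for z
  have gm: "g \<in> borel_measurable Q" unfolding g_def by (simp add: sQ cong: measurable_cong_sets)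
  have fm: "fst \<in> J \<rightarrow>\<^sub>M borel" by (simp add: sJ cong: measurable_cong_sets)
  have int_mu_g: "integrable (gaussian \<mu> \<sigma>) (\<lambda>x. (- \<mu> + 1 * x)\<^sup>2)" by (rule gauss_sq_int[OF sp])
  have int_mu: "integrable J (\<lambda>z. (fst z - \<mu>)\<^sup>2)"
  proof -
    have "integrable (distr J borel fst) (\<lambda>x. (x - \<mu>)\<^sup>2)" unfolding J1 using int_mu_g by simp
    then show ?thesis by (subst (asm) integrable_distr_eq[OF fm]) auto
  qed
  have E_mu: "(\<integral>z. (fst z - \<mu>)\<^sup>2 \<partial>J) = \<sigma>\<^sup>2"
  proof -
    have "(\<integral>z. (fst z - \<mu>)\<^sup>2 \<partial>J) = (\<integral>x. (x - \<mu>)\<^sup>2 \<partial>distr J borel fst)"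
      by (rule integral_distr[OF fm, symmetric]) simp
    also have "\<dots> = (\<integral>x. (- \<mu> + 1 * x)\<^sup>2 \<partial>gaussian \<mu> \<sigma>)" unfolding J1 by simp
    also have "\<dots> = \<sigma>\<^sup>2" using gauss_sq_int(2)[OF sp, of \<mu> "-\<mu>" 1] by simp
    finally show ?thesis .
  qed
  have intg: "integrable J g" unfolding g_def
    using intE int_mu by (intro Bochner_Integration.integrable_add Bochner_Integration.integrable_diff integrable_divide_zero J.integrable_const) auto
  have Eg: "(\<integral>z. g z \<partial>J) = ln \<sigma> - ln (sqrt v) - (\<integral>z. (fst z - m (snd z))\<^sup>2 \<partial>J) / (2* v) + 1/2"
    unfolding g_def using intE int_mu sp by (simp add: E_mu J.prob_space)
  have nn1: "(\<integral>\<^sup>+z. ennreal (exp (g z)) \<partial>Q) = 1"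
  proof -
    have "(\<integral>\<^sup>+z. ennreal (exp (g z)) \<partial>Q) = (\<integral>\<^sup>+u. \<integral>\<^sup>+x. ennreal (exp (g (x, u))) \<partial>gaussian \<mu> \<sigma> \<partial>J2)"
      unfolding Q_def using gm unfolding Q_def by (subst GJ.nn_integral_snd[symmetric]) auto
    also have "\<dots> = (\<integral>\<^sup>+u. 1 \<partial>J2)"
    proof (intro nn_integral_cong)
      fix u
      have "(\<integral>\<^sup>+x. ennreal (exp (g (x, u))) \<partial>gaussian \<mu> \<sigma>) =
          (\<integral>\<^sup>+x. ennreal (normal_density \<mu> \<sigma> x) * ennreal (exp (g (x, u))) \<partial>lborel)"
        by (subst nn_integral_gaussian) (auto simp: g_def)
      also have "\<dots> = (\<integral>\<^sup>+x. ennreal (normal_density (m u) (sqrt v) x) \<partial>lborel)"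
        by (intro nn_integral_cong)
           (simp add: ennreal_mult[symmetric] g_def normal_ratio[OF sp vp])
      also have "\<dots> = 1" using vp by (simp add: nn_integral_normal_density_1)
      finally show "(\<integral>\<^sup>+x. ennreal (exp (g (x, u))) \<partial>gaussian \<mu> \<sigma>) = 1" .
    qed
    also have "\<dots> = 1" by (simp add: J2.emeasure_space_1)
    finally show ?thesis .
  qed
  have intQ: "integrable Q (\<lambda>z. exp (g z))"
    using nn1 gm by (intro integrableI_nonneg) auto
  have one: "(\<integral>z. exp (g z) \<partial>Q) = 1"
    using nn1 intQ by (subst (asm) nn_integral_eq_integral) auto
  have "ennreal ((\<integral>z. g z \<partial>J) / ln 2) \<le> KL_div J Q"
    by (rule KL_lower[OF Jp Qp _ gm intg intQ one]) (simp add: sJ sQ)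
  then show ?thesis unfolding mutual_info_def Qeq Eg .
qed


lemma nn_to_int:
  fixes f :: "'a \<Rightarrow> real"
  assumes [measurable]: "f \<in> borel_measurable M" and nn: "\<And>x. 0 \<le> f x"
    and eq: "(\<integral>\<^sup>+x. ennreal (f x) \<partial>M) = ennreal c" and c: "0 \<le> c"
  shows "integrable M f" "(\<integral>x. f x \<partial>M) = c"
proof -
  show i: "integrable M f" using eq nn by (intro integrableI_nonneg) auto
  have "ennreal (\<integral>x. f x \<partial>M) = ennreal c" using eq nn i by (subst (asm) nn_integral_eq_integral) auto
  then show "(\<integral>x. f x \<partial>M) = c" using c nn by (simp add: integral_nonneg)
qed

definition sr :: "real \<Rightarrow> real \<Rightarrow> real" where "sr \<sigma> r = \<sigma> * sqrt (1 - r\<^sup>2)"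
definition Kr :: "real \<Rightarrow> real \<Rightarrow> real \<Rightarrow> real \<Rightarrow> real measure" where
  "Kr \<mu> \<sigma> r t = gaussian (\<mu> + r * (t - \<mu>)) (sr \<sigma> r)"
definition hr :: "real \<Rightarrow> real \<Rightarrow> real \<Rightarrow> real \<Rightarrow> real \<Rightarrow> real" where
  "hr \<mu> \<sigma> r x y = normal_density \<mu> \<sigma> x * normal_density (\<mu> + r * (x - \<mu>)) (sr \<sigma> r) y"
definition Pr :: "real \<Rightarrow> real \<Rightarrow> real \<Rightarrow> (real \<times> real) measure" where
  "Pr \<mu> \<sigma> r = gaussian \<mu> \<sigma> \<bind> (\<lambda>x. distr (Kr \<mu> \<sigma> r x) (borel \<Otimes>\<^sub>M borel) (Pair x))"

lemma hr_measurable[measurable]: "(\<lambda>(x, y). hr \<mu> \<sigma> r x y) \<in> borel_measurable (borel \<Otimes>\<^sub>M borel)"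
  unfolding hr_def normal_density_def by measurable

context
  fixes \<mu> \<sigma> r :: real
  assumes sp: "\<sigma> > 0" and r0: "0 \<le> r" and r1: "r < 1"
begin

lemma sr_pos: "sr \<sigma> r > 0"
proof -
  have "r\<^sup>2 < 1" using r0 r1 by (simp add: power_less_one_iff abs_square_less_1)
  then show ?thesis using sp unfolding sr_def by simp
qed

lemma sr_sq: "(sr \<sigma> r)\<^sup>2 = \<sigma>\<^sup>2 * (1 - r\<^sup>2)"
proof -
  have "r\<^sup>2 < 1" using r0 r1 by (simp add: abs_square_less_1)
  then show ?thesis unfolding sr_def by (simp add: power_mult_distrib)
qed

lemma Kr_prob: "prob_space (Kr \<mu> \<sigma> r t)"
  unfolding Kr_def using sr_pos by (rule gaussian_prob)

lemma Kr_nn: "F \<in> borel_measurable borel \<Longrightarrow>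
  (\<integral>\<^sup>+y. F y \<partial>Kr \<mu> \<sigma> r t) = (\<integral>\<^sup>+y. ennreal (normal_density (\<mu> + r * (t - \<mu>)) (sr \<sigma> r) y) * F y \<partial>lborel)"
  unfolding Kr_def by (rule nn_integral_gaussian)

lemma Kr_meas[measurable]: "Kr \<mu> \<sigma> r \<in> borel \<rightarrow>\<^sub>M prob_algebra borel"
proof (rule measurable_prob_algebraI)
  show "prob_space (Kr \<mu> \<sigma> r x)" for x by (rule Kr_prob)
  show "Kr \<mu> \<sigma> r \<in> borel \<rightarrow>\<^sub>M subprob_algebra borel"
  proof (rule measurable_subprob_algebra)
    show "subprob_space (Kr \<mu> \<sigma> r a)" for a using Kr_prob prob_space_imp_subprob_space by blast
    show "sets (Kr \<mu> \<sigma> r a) = sets borel" for a by (simp add: Kr_def)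
    fix X :: "real set" assume X[measurable]: "X \<in> sets borel"
    have "(\<lambda>a. \<integral>\<^sup>+y. ennreal (normal_density (\<mu> + r * (a - \<mu>)) (sr \<sigma> r) y) * indicator X y \<partial>lborel) \<in> borel_measurable borel"
      unfolding normal_density_def by measurable
    moreover have "emeasure (Kr \<mu> \<sigma> r a) X = (\<integral>\<^sup>+y. ennreal (normal_density (\<mu> + r * (a - \<mu>)) (sr \<sigma> r) y) * indicator X y \<partial>lborel)" for a
      unfolding Kr_def gaussian_def by (subst emeasure_density) auto
    ultimately show "(\<lambda>a. emeasure (Kr \<mu> \<sigma> r a) X) \<in> borel_measurable borel" by simp
  qed
qed

lemma hr_sym: "hr \<mu> \<sigma> r x y = hr \<mu> \<sigma> r y x"
proof -
  define s where "s = sr \<sigma> r"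
  have s2: "s\<^sup>2 = \<sigma>\<^sup>2 * (1 - r\<^sup>2)" unfolding s_def by (rule sr_sq)
  have rr: "1 - r\<^sup>2 > 0" using r0 r1 by (simp add: abs_square_less_1)
  have ex: "(x - \<mu>)\<^sup>2 / (2 * \<sigma>\<^sup>2) + (y - (\<mu> + r * (x - \<mu>)))\<^sup>2 / (2 * s\<^sup>2) =
            (y - \<mu>)\<^sup>2 / (2 * \<sigma>\<^sup>2) + (x - (\<mu> + r * (y - \<mu>)))\<^sup>2 / (2 * s\<^sup>2)"
    unfolding s2 using sp rr by (simp add: field_simps power2_eq_square)
  define a1 where "a1 = - (x - \<mu>)\<^sup>2 / (2 * \<sigma>\<^sup>2)"
  define b1 where "b1 = - (y - (\<mu> + r * (x - \<mu>)))\<^sup>2 / (2 * s\<^sup>2)"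
  define a2 where "a2 = - (y - \<mu>)\<^sup>2 / (2 * \<sigma>\<^sup>2)"
  define b2 where "b2 = - (x - (\<mu> + r * (y - \<mu>)))\<^sup>2 / (2 * s\<^sup>2)"
  have ex2: "a1 + b1 = a2 + b2" unfolding a1_def b1_def a2_def b2_def using ex by (simp add: field_simps)
  have "hr \<mu> \<sigma> r x y = 1 / sqrt (2 * pi * \<sigma>\<^sup>2) * (1 / sqrt (2 * pi * s\<^sup>2)) * exp (a1 + b1)"
    unfolding hr_def normal_density_def s_def[symmetric] a1_def[symmetric] b1_def[symmetric] by (simp add: exp_add mult_ac)
  also have "\<dots> = hr \<mu> \<sigma> r y x"
    unfolding ex2 hr_def normal_density_def s_def[symmetric] a2_def[symmetric] b2_def[symmetric] by (simp add: exp_add mult_ac)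
  finally show ?thesis .
qed

lemma Pr_GB: "prob_space (Pr \<mu> \<sigma> r)" "sets (Pr \<mu> \<sigma> r) = sets (borel \<Otimes>\<^sub>M borel)"
  "distr (Pr \<mu> \<sigma> r) borel fst = gaussian \<mu> \<sigma>"
  unfolding Pr_def
  by (rule GB_prob GB_sets GB_fst; simp add: gaussian_prob sp)+

lemma Pr_nn1:
  assumes F[measurable]: "F \<in> borel_measurable (borel \<Otimes>\<^sub>M borel)"
  shows "(\<integral>\<^sup>+z. F z \<partial>Pr \<mu> \<sigma> r) = (\<integral>\<^sup>+x. \<integral>\<^sup>+y. F (x, y) \<partial>Kr \<mu> \<sigma> r x \<partial>gaussian \<mu> \<sigma>)"
  unfolding Pr_def by (rule GB_nn) (simp_all add: gaussian_prob sp)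

lemma Pr_nn:
  assumes F[measurable]: "F \<in> borel_measurable (borel \<Otimes>\<^sub>M borel)"
  shows "(\<integral>\<^sup>+z. F z \<partial>Pr \<mu> \<sigma> r) = (\<integral>\<^sup>+x. \<integral>\<^sup>+y. ennreal (hr \<mu> \<sigma> r x y) * F (x, y) \<partial>lborel \<partial>lborel)"
proof -
  have "(\<integral>\<^sup>+z. F z \<partial>Pr \<mu> \<sigma> r) = (\<integral>\<^sup>+x. \<integral>\<^sup>+y. ennreal (normal_density (\<mu> + r * (x - \<mu>)) (sr \<sigma> r) y) * F (x, y) \<partial>lborel \<partial>gaussian \<mu> \<sigma>)"
    unfolding Pr_nn1[OF F] by (intro nn_integral_cong Kr_nn) simp
  also have "\<dots> = (\<integral>\<^sup>+x. ennreal (normal_density \<mu> \<sigma> x) * \<integral>\<^sup>+y. ennreal (normal_density (\<mu> + r * (x - \<mu>)) (sr \<sigma> r) y) * F (x, y) \<partial>lborel \<partial>lborel)"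
    by (rule nn_integral_gaussian) (unfold normal_density_def, measurable)
  also have "\<dots> = (\<integral>\<^sup>+x. \<integral>\<^sup>+y. ennreal (hr \<mu> \<sigma> r x y) * F (x, y) \<partial>lborel \<partial>lborel)"
    by (subst nn_integral_cmult[symmetric]) (auto simp: hr_def ennreal_mult mult.assoc)
  finally show ?thesis .
qed

lemma Pr_swap:
  assumes F[measurable]: "F \<in> borel_measurable (borel \<Otimes>\<^sub>M borel)"
  shows "(\<integral>\<^sup>+z. F (snd z, fst z) \<partial>Pr \<mu> \<sigma> r) = (\<integral>\<^sup>+z. F z \<partial>Pr \<mu> \<sigma> r)"
proof -
  have "(\<integral>\<^sup>+z. F (snd z, fst z) \<partial>Pr \<mu> \<sigma> r) = (\<integral>\<^sup>+x. \<integral>\<^sup>+y. ennreal (hr \<mu> \<sigma> r x y) * F (y, x) \<partial>lborel \<partial>lborel)"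
    by (subst Pr_nn) auto
  also have "\<dots> = (\<integral>\<^sup>+y. \<integral>\<^sup>+x. ennreal (hr \<mu> \<sigma> r x y) * F (y, x) \<partial>lborel \<partial>lborel)"
    by (rule lborel_pair.Fubini'[symmetric]) measurable
  also have "\<dots> = (\<integral>\<^sup>+y. \<integral>\<^sup>+x. ennreal (hr \<mu> \<sigma> r y x) * F (y, x) \<partial>lborel \<partial>lborel)"
    by (simp add: hr_sym)
  also have "\<dots> = (\<integral>\<^sup>+z. F z \<partial>Pr \<mu> \<sigma> r)"
    by (subst Pr_nn) auto
  finally show ?thesis .
qed

lemma Pr_stat:
  assumes G[measurable]: "G \<in> borel_measurable borel"
  shows "(\<integral>\<^sup>+x. \<integral>\<^sup>+u. G u \<partial>Kr \<mu> \<sigma> r x \<partial>gaussian \<mu> \<sigma>) = (\<integral>\<^sup>+u. G u \<partial>gaussian \<mu> \<sigma>)"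
proof -
  have "(\<integral>\<^sup>+x. \<integral>\<^sup>+u. G u \<partial>Kr \<mu> \<sigma> r x \<partial>gaussian \<mu> \<sigma>) = (\<integral>\<^sup>+z. G (snd z) \<partial>Pr \<mu> \<sigma> r)"
    by (subst Pr_nn1) auto
  also have "\<dots> = (\<integral>\<^sup>+z. G (fst z) \<partial>Pr \<mu> \<sigma> r)"
    using Pr_swap[of "\<lambda>z. G (fst z)"] by simp
  also have "\<dots> = (\<integral>\<^sup>+x. \<integral>\<^sup>+u. G x \<partial>Kr \<mu> \<sigma> r x \<partial>gaussian \<mu> \<sigma>)"
    by (subst Pr_nn1) auto
  also have "\<dots> = (\<integral>\<^sup>+x. G x \<partial>gaussian \<mu> \<sigma>)"
    by (intro nn_integral_cong) (simp add: prob_space.emeasure_space_1[OF Kr_prob])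
  finally show ?thesis .
qed

lemma Pr_snd: "distr (Pr \<mu> \<sigma> r) borel snd = gaussian \<mu> \<sigma>"
proof (rule measure_eqI)
  show "sets (distr (Pr \<mu> \<sigma> r) borel snd) = sets (gaussian \<mu> \<sigma>)" by simp
  fix X assume "X \<in> sets (distr (Pr \<mu> \<sigma> r) borel snd)"
  then have X[measurable]: "X \<in> sets borel" by simp
  have sm: "snd \<in> Pr \<mu> \<sigma> r \<rightarrow>\<^sub>M borel" by (simp add: Pr_GB cong: measurable_cong_sets)
  have "emeasure (distr (Pr \<mu> \<sigma> r) borel snd) X = (\<integral>\<^sup>+z. indicator X z \<partial>distr (Pr \<mu> \<sigma> r) borel snd)"
    by simp
  also have "\<dots> = (\<integral>\<^sup>+z. indicator X (snd z) \<partial>Pr \<mu> \<sigma> r)"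
    by (rule nn_integral_distr[OF sm]) simp
  also have "\<dots> = (\<integral>\<^sup>+x. \<integral>\<^sup>+u. indicator X u \<partial>Kr \<mu> \<sigma> r x \<partial>gaussian \<mu> \<sigma>)"
    by (subst Pr_nn1) auto
  also have "\<dots> = (\<integral>\<^sup>+u. indicator X u \<partial>gaussian \<mu> \<sigma>)"
    by (rule Pr_stat) simp
  also have "\<dots> = emeasure (gaussian \<mu> \<sigma>) X" using X by simp
  finally show "emeasure (distr (Pr \<mu> \<sigma> r) borel snd) X = emeasure (gaussian \<mu> \<sigma>) X" .
qed

lemma Pr_E: "(\<integral>\<^sup>+z. ennreal ((fst z - snd z)\<^sup>2) \<partial>Pr \<mu> \<sigma> r) = ennreal (2 * \<sigma>\<^sup>2 * (1 - r))"
proof -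
  have "(\<integral>\<^sup>+z. ennreal ((fst z - snd z)\<^sup>2) \<partial>Pr \<mu> \<sigma> r) =
      (\<integral>\<^sup>+x. \<integral>\<^sup>+y. ennreal ((x + (-1) * y)\<^sup>2) \<partial>Kr \<mu> \<sigma> r x \<partial>gaussian \<mu> \<sigma>)"
    by (subst Pr_nn1) auto
  also have "\<dots> = (\<integral>\<^sup>+x. ennreal ((- (1 - r) * \<mu> + (1 - r) * x)\<^sup>2) + ennreal ((sr \<sigma> r)\<^sup>2) \<partial>gaussian \<mu> \<sigma>)"
  proof (intro nn_integral_cong)
    fix x
    have "(\<integral>\<^sup>+y. ennreal ((x + (-1) * y)\<^sup>2) \<partial>Kr \<mu> \<sigma> r x) = ennreal ((x + (-1) * (\<mu> + r * (x - \<mu>)))\<^sup>2 + (-1)\<^sup>2 * (sr \<sigma> r)\<^sup>2)"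
      unfolding Kr_def by (rule nn_integral_gauss_sq[OF sr_pos])
    also have "(x + (-1) * (\<mu> + r * (x - \<mu>)))\<^sup>2 = (- (1 - r) * \<mu> + (1 - r) * x)\<^sup>2"
      by (simp add: algebra_simps power2_eq_square)
    then have "ennreal ((x + (-1) * (\<mu> + r * (x - \<mu>)))\<^sup>2 + (-1)\<^sup>2 * (sr \<sigma> r)\<^sup>2) = ennreal ((- (1 - r) * \<mu> + (1 - r) * x)\<^sup>2) + ennreal ((sr \<sigma> r)\<^sup>2)"
      by (simp add: ennreal_plus)
    finally show "(\<integral>\<^sup>+y. ennreal ((x + (-1) * y)\<^sup>2) \<partial>Kr \<mu> \<sigma> r x) = \<dots>" .
  qed
  also have "\<dots> = (\<integral>\<^sup>+x. ennreal ((- (1 - r) * \<mu> + (1 - r) * x)\<^sup>2) \<partial>gaussian \<mu> \<sigma>) + ennreal ((sr \<sigma> r)\<^sup>2)"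
    using prob_space.emeasure_space_1[OF gaussian_prob[OF sp], of \<mu>]
    by (subst nn_integral_add) auto
  also have "\<dots> = ennreal ((- (1 - r) * \<mu> + (1 - r) * \<mu>)\<^sup>2 + (1 - r)\<^sup>2 * \<sigma>\<^sup>2) + ennreal ((sr \<sigma> r)\<^sup>2)"
    by (subst nn_integral_gauss_sq[OF sp]) simp
  also have "\<dots> = ennreal ((- (1 - r) * \<mu> + (1 - r) * \<mu>)\<^sup>2 + (1 - r)\<^sup>2 * \<sigma>\<^sup>2 + (sr \<sigma> r)\<^sup>2)"
    by (rule ennreal_plus[symmetric]) auto
  also have "(- (1 - r) * \<mu> + (1 - r) * \<mu>)\<^sup>2 + (1 - r)\<^sup>2 * \<sigma>\<^sup>2 + (sr \<sigma> r)\<^sup>2 = 2 * \<sigma>\<^sup>2 * (1 - r)"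
    unfolding sr_sq by (simp add: algebra_simps power2_eq_square)
  finally show ?thesis .
qed

end


context
  fixes \<mu> \<sigma> r :: real
  assumes sp: "\<sigma> > 0" and r0: "0 \<le> r" and r1: "r < 1"
begin

lemma Pr_sq_nn:
  "(\<integral>\<^sup>+z. ennreal ((fst z - (\<mu> + r * (snd z - \<mu>)))\<^sup>2) \<partial>Pr \<mu> \<sigma> r) = ennreal ((sr \<sigma> r)\<^sup>2)"
proof -
  have "(\<integral>\<^sup>+z. ennreal ((fst z - (\<mu> + r * (snd z - \<mu>)))\<^sup>2) \<partial>Pr \<mu> \<sigma> r) =
        (\<integral>\<^sup>+z. ennreal ((snd z - (\<mu> + r * (fst z - \<mu>)))\<^sup>2) \<partial>Pr \<mu> \<sigma> r)"
    using Pr_swap[OF sp r0 r1, of "\<lambda>p. ennreal ((snd p - (\<mu> + r * (fst p - \<mu>)))\<^sup>2)"] by simp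
  also have "\<dots> = (\<integral>\<^sup>+x. \<integral>\<^sup>+y. ennreal ((- (\<mu> + r * (x - \<mu>)) + 1 * y)\<^sup>2) \<partial>Kr \<mu> \<sigma> r x \<partial>gaussian \<mu> \<sigma>)"
    by (subst Pr_nn1[OF sp r0 r1]) (auto intro!: nn_integral_cong simp: algebra_simps)
  also have "\<dots> = (\<integral>\<^sup>+x. ennreal ((sr \<sigma> r)\<^sup>2) \<partial>gaussian \<mu> \<sigma>)"
    unfolding Kr_def by (intro nn_integral_cong) (subst nn_integral_gauss_sq[OF sr_pos[OF sp r0 r1]], simp)
  also have "\<dots> = ennreal ((sr \<sigma> r)\<^sup>2)"
    using prob_space.emeasure_space_1[OF gaussian_prob[OF sp], of \<mu>] by simp
  finally show ?thesis .
qed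

lemma Pr_mu_nn:
  "(\<integral>\<^sup>+z. ennreal ((fst z - \<mu>)\<^sup>2) \<partial>Pr \<mu> \<sigma> r) = ennreal (\<sigma>\<^sup>2)"
proof -
  have "(\<integral>\<^sup>+z. ennreal ((fst z - \<mu>)\<^sup>2) \<partial>Pr \<mu> \<sigma> r) = (\<integral>\<^sup>+x. \<integral>\<^sup>+y. ennreal ((- \<mu> + 1 * x)\<^sup>2) \<partial>Kr \<mu> \<sigma> r x \<partial>gaussian \<mu> \<sigma>)"
    by (subst Pr_nn1[OF sp r0 r1]) auto
  also have "\<dots> = (\<integral>\<^sup>+x. ennreal ((- \<mu> + 1 * x)\<^sup>2) \<partial>gaussian \<mu> \<sigma>)"
    by (intro nn_integral_cong) (simp add: prob_space.emeasure_space_1[OF Kr_prob[OF sp r0 r1]])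
  also have "\<dots> = ennreal (\<sigma>\<^sup>2)" by (subst nn_integral_gauss_sq[OF sp]) simp
  finally show ?thesis .
qed

lemma Pr_MI: "mutual_info borel borel (Pr \<mu> \<sigma> r) = ennreal ((ln \<sigma> - ln (sr \<sigma> r)) / ln 2)"
proof -
  define s where "s = sr \<sigma> r"
  have s0: "s > 0" unfolding s_def by (rule sr_pos[OF sp r0 r1])
  define v where "v = s\<^sup>2"
  have v0: "v > 0" using s0 by (simp add: v_def)
  have sv: "sqrt v = s" using s0 by (simp add: v_def)
  interpret G: prob_space "gaussian \<mu> \<sigma>" using gaussian_prob[OF sp] .
  interpret GG: pair_sigma_finite "gaussian \<mu> \<sigma>" "gaussian \<mu> \<sigma>" ..
  define Q where "Q = gaussian \<mu> \<sigma> \<Otimes>\<^sub>M gaussian \<mu> \<sigma>"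
  have Qeq: "distr (Pr \<mu> \<sigma> r) borel fst \<Otimes>\<^sub>M distr (Pr \<mu> \<sigma> r) borel snd = Q"
    unfolding Q_def Pr_GB(3)[OF sp r0 r1] Pr_snd[OF sp r0 r1] ..
  have sQ: "sets Q = sets (borel \<Otimes>\<^sub>M borel)" unfolding Q_def
    by (intro sets_pair_measure_cong) simp_all
  have Qp: "prob_space Q" unfolding Q_def by (intro prob_space_pair) (simp_all add: gaussian_prob sp)
  define g where "g z = ln \<sigma> - ln (sqrt v) - (fst z - (\<mu> + r * (snd z - \<mu>)))\<^sup>2 / (2 * v) + (fst z - \<mu>)\<^sup>2 / (2*\<sigma>\<^sup>2)" for z
  have gm: "g \<in> borel_measurable Q" unfolding g_def by (simp add: sQ cong: measurable_cong_sets)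
  have gm2[measurable]: "g \<in> borel_measurable (borel \<Otimes>\<^sub>M borel)" unfolding g_def by simp
  have key: "normal_density \<mu> \<sigma> x * normal_density \<mu> \<sigma> y * exp (g (x, y)) = hr \<mu> \<sigma> r x y" for x y
  proof -
    have "normal_density \<mu> \<sigma> x * exp (g (x, y)) = normal_density (\<mu> + r * (y - \<mu>)) (sqrt v) x"
      unfolding g_def by (simp add: normal_ratio[OF sp v0])
    then have "normal_density \<mu> \<sigma> x * normal_density \<mu> \<sigma> y * exp (g (x, y)) = hr \<mu> \<sigma> r y x"
      unfolding hr_def sv s_def by (simp add: mult_ac)
    then show ?thesis using hr_sym[OF sp r0 r1] by simp
  qed
  have Pd: "Pr \<mu> \<sigma> r = density Q (\<lambda>z. ennreal (exp (g z)))"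
  proof (rule measure_eqI)
    show "sets (Pr \<mu> \<sigma> r) = sets (density Q (\<lambda>z. ennreal (exp (g z))))"
      by (simp add: Pr_GB[OF sp r0 r1] sQ)
    fix A assume "A \<in> sets (Pr \<mu> \<sigma> r)"
    then have A[measurable]: "A \<in> sets (borel \<Otimes>\<^sub>M borel)" by (simp add: Pr_GB[OF sp r0 r1])
    have "emeasure (density Q (\<lambda>z. ennreal (exp (g z)))) A = (\<integral>\<^sup>+z. ennreal (exp (g z)) * indicator A z \<partial>Q)"
      using gm by (subst emeasure_density) (auto simp: sQ)
    also have "\<dots> = (\<integral>\<^sup>+x. \<integral>\<^sup>+y. ennreal (exp (g (x, y))) * indicator A (x, y) \<partial>gaussian \<mu> \<sigma> \<partial>gaussian \<mu> \<sigma>)"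
      unfolding Q_def by (rule G.nn_integral_fst[symmetric]) (simp add: sQ[unfolded Q_def] cong: measurable_cong_sets)
    also have "\<dots> = (\<integral>\<^sup>+x. ennreal (normal_density \<mu> \<sigma> x) * \<integral>\<^sup>+y. ennreal (normal_density \<mu> \<sigma> y) * (ennreal (exp (g (x, y))) * indicator A (x, y)) \<partial>lborel \<partial>lborel)"
      by (subst nn_integral_gaussian, measurable, subst nn_integral_gaussian, measurable)
    also have "\<dots> = (\<integral>\<^sup>+x. \<integral>\<^sup>+y. ennreal (hr \<mu> \<sigma> r x y) * indicator A (x, y) \<partial>lborel \<partial>lborel)"
      by (subst nn_integral_cmult[symmetric], measurable)
         (simp add: key[symmetric] ennreal_mult[symmetric] mult.assoc[symmetric])
    also have "\<dots> = (\<integral>\<^sup>+z. indicator A z \<partial>Pr \<mu> \<sigma> r)"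
      by (subst Pr_nn[OF sp r0 r1]) auto
    also have "\<dots> = emeasure (Pr \<mu> \<sigma> r) A" using A by (simp add: Pr_GB[OF sp r0 r1])
    finally show "emeasure (Pr \<mu> \<sigma> r) A = emeasure (density Q (\<lambda>z. ennreal (exp (g z)))) A" ..
  qed
  have i1: "integrable (Pr \<mu> \<sigma> r) (\<lambda>z. (fst z - (\<mu> + r * (snd z - \<mu>)))\<^sup>2)"
    and e1: "(\<integral>z. (fst z - (\<mu> + r * (snd z - \<mu>)))\<^sup>2 \<partial>Pr \<mu> \<sigma> r) = v"
    using nn_to_int[OF _ _ Pr_sq_nn] by (auto simp: v_def s_def Pr_GB[OF sp r0 r1] cong: measurable_cong_sets)
  have i2: "integrable (Pr \<mu> \<sigma> r) (\<lambda>z. (fst z - \<mu>)\<^sup>2)"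
    and e2: "(\<integral>z. (fst z - \<mu>)\<^sup>2 \<partial>Pr \<mu> \<sigma> r) = \<sigma>\<^sup>2"
    using nn_to_int[OF _ _ Pr_mu_nn] by (auto simp: Pr_GB[OF sp r0 r1] cong: measurable_cong_sets)
  interpret P: prob_space "Pr \<mu> \<sigma> r" by (rule Pr_GB[OF sp r0 r1])
  have intg: "integrable (Pr \<mu> \<sigma> r) g" unfolding g_def
    using i1 i2 by (intro Bochner_Integration.integrable_add Bochner_Integration.integrable_diff integrable_divide_zero P.integrable_const) auto
  have Eg: "(\<integral>z. g z \<partial>Pr \<mu> \<sigma> r) = ln \<sigma> - ln s"
    unfolding g_def using i1 i2 e1 e2 v0 sp by (simp add: P.prob_space sv)
  have "KL_div (Pr \<mu> \<sigma> r) Q = ennreal ((\<integral>z. g z \<partial>Pr \<mu> \<sigma> r) / ln 2)"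
    by (rule KL_exact[OF Pr_GB(1)[OF sp r0 r1] Qp gm Pd intg])
  then show ?thesis unfolding mutual_info_def Qeq Eg s_def .
qed

end


lemma marg_sq:
  assumes sp: "\<sigma> > 0" and fm[measurable]: "f \<in> P \<rightarrow>\<^sub>M borel" and d: "distr P borel f = gaussian \<mu> \<sigma>"
  shows "integrable P (\<lambda>z. (f z - \<mu>)\<^sup>2)" "(\<integral>z. (f z - \<mu>)\<^sup>2 \<partial>P) = \<sigma>\<^sup>2"
proof -
  have "integrable (distr P borel f) (\<lambda>x. (x - \<mu>)\<^sup>2)" unfolding d using gauss_sq_int(1)[OF sp, of \<mu> "-\<mu>" 1] by simp
  then show "integrable P (\<lambda>z. (f z - \<mu>)\<^sup>2)" by (subst (asm) integrable_distr_eq[OF fm]) auto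
  have "(\<integral>z. (f z - \<mu>)\<^sup>2 \<partial>P) = (\<integral>x. (x - \<mu>)\<^sup>2 \<partial>distr P borel f)"
    by (rule integral_distr[OF fm, symmetric]) simp
  also have "\<dots> = (\<integral>x. (- \<mu> + 1 * x)\<^sup>2 \<partial>gaussian \<mu> \<sigma>)" unfolding d by simp
  also have "\<dots> = \<sigma>\<^sup>2" using gauss_sq_int(2)[OF sp, of \<mu> "-\<mu>" 1] by simp
  finally show "(\<integral>z. (f z - \<mu>)\<^sup>2 \<partial>P) = \<sigma>\<^sup>2" .
qed

lemma ennreal_all_nat_top:
  assumes "\<And>n::nat. ennreal (real n) \<le> x" shows "x = \<top>"
proof (rule ccontr)
  assume "x \<noteq> \<top>"
  then obtain y where y: "x = ennreal y" "0 \<le> y" by (cases x) auto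
  obtain n :: nat where "y < real n" using reals_Archimedean2 by blast
  with assms[of n] y show False by (simp add: ennreal_le_iff2 not_le)
qed

context
  fixes J :: "(real \<times> 'b) measure" and M :: "'b measure" and m :: "'b \<Rightarrow> real" and \<mu> \<sigma> :: real
  assumes sp: "\<sigma> > 0" and Jp: "prob_space J" and sJ: "sets J = sets (borel \<Otimes>\<^sub>M M)"
    and J1: "distr J borel fst = gaussian \<mu> \<sigma>"
    and mm[measurable]: "m \<in> borel_measurable M"
    and intE: "integrable J (\<lambda>z. (fst z - m (snd z))\<^sup>2)"
begin

lemma GC1:
  assumes E: "(\<integral>z. (fst z - m (snd z))\<^sup>2 \<partial>J) \<le> c" and c: "c > 0"
  shows "ennreal (1/2 * log 2 (\<sigma>\<^sup>2 / c)) \<le> mutual_info borel M J"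
proof -
  have "1/2 * log 2 (\<sigma>\<^sup>2 / c) \<le> (ln \<sigma> - ln (sqrt c) - (\<integral>z. (fst z - m (snd z))\<^sup>2 \<partial>J) / (2 * c) + 1/2) / ln 2"
  proof -
    have "(\<integral>z. (fst z - m (snd z))\<^sup>2 \<partial>J) / (2 * c) \<le> 1/2" using E c by (simp add: field_simps)
    moreover have "ln (\<sigma>\<^sup>2 / c) = 2 * (ln \<sigma> - ln (sqrt c))"
      using sp c by (simp add: ln_div ln_sqrt power2_eq_square ln_mult)
    ultimately show ?thesis unfolding log_def by (simp add: divide_right_mono field_simps)
  qed
  then have "ennreal (1/2 * log 2 (\<sigma>\<^sup>2 / c)) \<le> ennreal ((ln \<sigma> - ln (sqrt c) - (\<integral>z. (fst z - m (snd z))\<^sup>2 \<partial>J) / (2 * c) + 1/2) / ln 2)"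
    by (rule ennreal_leI)
  also have "\<dots> \<le> mutual_info borel M J"
    by (rule gauss_MI_lower[OF sp Jp sJ J1 mm intE c])
  finally show ?thesis .
qed

lemma GC0:
  assumes E: "(\<integral>z. (fst z - m (snd z))\<^sup>2 \<partial>J) \<le> 0"
  shows "mutual_info borel M J = \<top>"
proof (rule ennreal_all_nat_top)
  fix n :: nat
  define v where "v = (\<sigma> / 2 ^ n)\<^sup>2"
  have v0: "v > 0" using sp by (simp add: v_def)
  have sv: "sqrt v = \<sigma> / 2 ^ n" using sp by (simp add: v_def)
  have "real n \<le> (ln \<sigma> - ln (sqrt v) - (\<integral>z. (fst z - m (snd z))\<^sup>2 \<partial>J) / (2 * v) + 1/2) / ln 2"
  proof -
    have "ln \<sigma> - ln (sqrt v) = real n * ln 2" using sp unfolding sv by (simp add: ln_div ln_realpow)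
    moreover have "(\<integral>z. (fst z - m (snd z))\<^sup>2 \<partial>J) / (2 * v) \<le> 0" using E v0 by (simp add: divide_nonpos_pos)
    ultimately show ?thesis by (simp add: field_simps)
  qed
  then have "ennreal (real n) \<le> ennreal ((ln \<sigma> - ln (sqrt v) - (\<integral>z. (fst z - m (snd z))\<^sup>2 \<partial>J) / (2 * v) + 1/2) / ln 2)"
    by (rule ennreal_leI)
  also have "\<dots> \<le> mutual_info borel M J"
    by (rule gauss_MI_lower[OF sp Jp sJ J1 mm intE v0])
  finally show "ennreal (real n) \<le> mutual_info borel M J" .
qed

end

context
  fixes P :: "(real \<times> real) measure" and \<mu> \<sigma> D :: real
  assumes sp: "\<sigma> > 0" and Pp: "prob_space P" and sP: "sets P = sets (borel \<Otimes>\<^sub>M borel)"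
    and P1: "distr P borel fst = gaussian \<mu> \<sigma>" and P2: "distr P borel snd = gaussian \<mu> \<sigma>"
    and PE: "(\<integral>\<^sup>+z. ennreal ((fst z - snd z)\<^sup>2) \<partial>P) \<le> ennreal D" and Dnn: "0 \<le> D"
begin

lemma PE_int: "integrable P (\<lambda>z. (fst z - snd z)\<^sup>2)" "(\<integral>z. (fst z - snd z)\<^sup>2 \<partial>P) \<le> D"
proof -
  show i: "integrable P (\<lambda>z. (fst z - snd z)\<^sup>2)"
    using PE by (intro integrableI_nonneg) (auto simp: sP top_unique cong: measurable_cong_sets intro: le_less_trans)
  have "ennreal (\<integral>z. (fst z - snd z)\<^sup>2 \<partial>P) \<le> ennreal D"
    using PE i by (subst nn_integral_eq_integral[symmetric]) auto
  moreover have "0 \<le> (\<integral>z. (fst z - snd z)\<^sup>2 \<partial>P)" by (simp add: integral_nonneg)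
  ultimately show "(\<integral>z. (fst z - snd z)\<^sup>2 \<partial>P) \<le> D"
    using Dnn by (simp add: ennreal_le_iff)
qed

lemma phi_lower_P0:
  assumes D0: "D = 0"
  shows "mutual_info borel borel P = \<top>"
  by (rule GC0[OF sp Pp sP P1, where m="\<lambda>y. y"]) (use PE_int D0 in auto)

lemma phi_lower_P:
  assumes D0: "0 < D" and D1: "D < 2 * \<sigma>\<^sup>2"
  shows "ennreal (1/2 * log 2 (4 * \<sigma>^4 / (4 * \<sigma>\<^sup>2 * D - D\<^sup>2))) \<le> mutual_info borel borel P"
proof -
  define \<rho> where "\<rho> = 1 - D / (2 * \<sigma>\<^sup>2)"
  have \<rho>0: "0 < \<rho>" "\<rho> < 1" using D0 D1 sp by (auto simp: \<rho>_def field_simps)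
  define c where "c = \<sigma>\<^sup>2 * (1 - \<rho>\<^sup>2)"
  have c0: "c > 0" using \<rho>0 sp by (simp add: c_def abs_square_less_1)
  have fm: "fst \<in> P \<rightarrow>\<^sub>M borel" "snd \<in> P \<rightarrow>\<^sub>M borel" by (simp_all add: sP cong: measurable_cong_sets)
  note m1 = marg_sq[OF sp fm(1) P1] and m2 = marg_sq[OF sp fm(2) P2]
  note e = PE_int
  have id: "(\<lambda>z. (fst z - (\<mu> + \<rho> * (snd z - \<mu>)))\<^sup>2) =
     (\<lambda>z. \<rho> * (fst z - snd z)\<^sup>2 + (1 - \<rho>) * (fst z - \<mu>)\<^sup>2 - \<rho> * (1 - \<rho>) * (snd z - \<mu>)\<^sup>2)"
    by (auto simp: fun_eq_iff algebra_simps power2_eq_square)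
  have intE: "integrable P (\<lambda>z. (fst z - (\<mu> + \<rho> * (snd z - \<mu>)))\<^sup>2)"
    unfolding id using m1 m2 e by auto
  have "(\<integral>z. (fst z - (\<mu> + \<rho> * (snd z - \<mu>)))\<^sup>2 \<partial>P) =
     \<rho> * (\<integral>z. (fst z - snd z)\<^sup>2 \<partial>P) + (1 - \<rho>) * \<sigma>\<^sup>2 - \<rho> * (1 - \<rho>) * \<sigma>\<^sup>2"
    unfolding id using m1 m2 e by simp
  also have "\<dots> \<le> \<rho> * D + (1 - \<rho>) * \<sigma>\<^sup>2 - \<rho> * (1 - \<rho>) * \<sigma>\<^sup>2"
    using e(2) \<rho>0 by simp
  also have "\<dots> = c" unfolding c_def \<rho>_def using sp by (simp add: field_simps power2_eq_square)
  finally have Ec: "(\<integral>z. (fst z - (\<mu> + \<rho> * (snd z - \<mu>)))\<^sup>2 \<partial>P) \<le> c" .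
  have "ennreal (1/2 * log 2 (\<sigma>\<^sup>2 / c)) \<le> mutual_info borel borel P"
    by (rule GC1[OF sp Pp sP P1 _ intE Ec c0]) simp
  moreover have "\<sigma>\<^sup>2 / c = 4 * \<sigma>^4 / (4 * \<sigma>\<^sup>2 * D - D\<^sup>2)"
  proof -
    have "c = (4 * \<sigma>\<^sup>2 * D - D\<^sup>2) / (4 * \<sigma>\<^sup>2)"
      unfolding c_def \<rho>_def using sp by (simp add: field_simps power2_eq_square)
    then show ?thesis using sp by (simp add: power4_eq_xxxx power2_eq_square)
  qed
  ultimately show ?thesis by simp
qed

end


lemma val_r:
  assumes sp: "\<sigma> > 0" and r0: "0 \<le> r" and r1: "r < 1"
  shows "(ln \<sigma> - ln (sr \<sigma> r)) / ln 2 = 1/2 * log 2 (1 / (1 - r\<^sup>2))"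
proof -
  have rr: "1 - r\<^sup>2 > 0" using r0 r1 by (simp add: abs_square_less_1)
  have "ln (sr \<sigma> r) = ln \<sigma> + 1/2 * ln (1 - r\<^sup>2)"
    unfolding sr_def using sp rr by (simp add: ln_mult ln_sqrt)
  then show ?thesis using rr unfolding log_def by (simp add: ln_div)
qed

context
  fixes \<mu> \<sigma> :: real assumes sp: "\<sigma> > 0"
begin

lemma phiK_facts:
  assumes K: "K \<in> borel \<rightarrow>\<^sub>M prob_algebra (borel :: real measure)"
  shows "prob_space (gaussian \<mu> \<sigma> \<bind> (\<lambda>x. distr (K x) (borel \<Otimes>\<^sub>M borel) (\<lambda>y. (x, y))))"
    "sets (gaussian \<mu> \<sigma> \<bind> (\<lambda>x. distr (K x) (borel \<Otimes>\<^sub>M borel) (\<lambda>y. (x, y)))) = sets (borel \<Otimes>\<^sub>M borel)"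
    "distr (gaussian \<mu> \<sigma> \<bind> (\<lambda>x. distr (K x) (borel \<Otimes>\<^sub>M borel) (\<lambda>y. (x, y)))) borel fst = gaussian \<mu> \<sigma>"
  using GB_prob[OF gaussian_prob[OF sp] _ K] GB_sets[OF gaussian_prob[OF sp] _ K] GB_fst[OF gaussian_prob[OF sp] _ K]
  by simp_all

lemma phi_ge:
  assumes D: "0 \<le> D"
    and H: "\<And>P. prob_space P \<Longrightarrow> sets P = sets (borel \<Otimes>\<^sub>M borel) \<Longrightarrow>
        distr P borel fst = gaussian \<mu> \<sigma> \<Longrightarrow> distr P borel snd = gaussian \<mu> \<sigma> \<Longrightarrow>
        (\<integral>\<^sup>+z. ennreal ((fst z - snd z)\<^sup>2) \<partial>P) \<le> ennreal D \<Longrightarrow> B \<le> mutual_info borel borel P"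
  shows "B \<le> phi \<mu> \<sigma> D"
  unfolding phi_def
proof (rule INF_greatest)
  fix K assume "K \<in> {K. K \<in> borel \<rightarrow>\<^sub>M prob_algebra borel \<and>
             (let P = gaussian \<mu> \<sigma> \<bind> (\<lambda>x. distr (K x) (borel \<Otimes>\<^sub>M borel) (\<lambda>y. (x, y))) in
                (\<integral>\<^sup>+ z. ennreal ((fst z - snd z)\<^sup>2) \<partial>P) \<le> ennreal D \<and>
                distr P borel snd = gaussian \<mu> \<sigma>)}"
  then have K: "K \<in> borel \<rightarrow>\<^sub>M prob_algebra borel"
    and E: "(\<integral>\<^sup>+ z. ennreal ((fst z - snd z)\<^sup>2) \<partial>(gaussian \<mu> \<sigma> \<bind> (\<lambda>x. distr (K x) (borel \<Otimes>\<^sub>M borel) (\<lambda>y. (x, y))))) \<le> ennreal D"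
    and S: "distr (gaussian \<mu> \<sigma> \<bind> (\<lambda>x. distr (K x) (borel \<Otimes>\<^sub>M borel) (\<lambda>y. (x, y)))) borel snd = gaussian \<mu> \<sigma>"
    by (auto simp: Let_def)
  show "B \<le> mutual_info borel borel (gaussian \<mu> \<sigma> \<bind> (\<lambda>x. distr (K x) (borel \<Otimes>\<^sub>M borel) (\<lambda>y. (x, y))))"
    by (rule H[OF phiK_facts(1,2,3)[OF K] S E])
qed

lemma phi_le:
  assumes r0: "0 \<le> r" and r1: "r < 1" and D: "2 * \<sigma>\<^sup>2 * (1 - r) \<le> D"
  shows "phi \<mu> \<sigma> D \<le> ennreal (1/2 * log 2 (1 / (1 - r\<^sup>2)))"
proof -
  have eq: "gaussian \<mu> \<sigma> \<bind> (\<lambda>x. distr (Kr \<mu> \<sigma> r x) (borel \<Otimes>\<^sub>M borel) (\<lambda>y. (x, y))) = Pr \<mu> \<sigma> r"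
    unfolding Pr_def by simp
  have "phi \<mu> \<sigma> D \<le> mutual_info borel borel (gaussian \<mu> \<sigma> \<bind> (\<lambda>x. distr (Kr \<mu> \<sigma> r x) (borel \<Otimes>\<^sub>M borel) (\<lambda>y. (x, y))))"
    unfolding phi_def
  proof (rule INF_lower)
    show "Kr \<mu> \<sigma> r \<in> {K. K \<in> borel \<rightarrow>\<^sub>M prob_algebra borel \<and>
             (let P = gaussian \<mu> \<sigma> \<bind> (\<lambda>x. distr (K x) (borel \<Otimes>\<^sub>M borel) (\<lambda>y. (x, y))) in
                (\<integral>\<^sup>+ z. ennreal ((fst z - snd z)\<^sup>2) \<partial>P) \<le> ennreal D \<and>
                distr P borel snd = gaussian \<mu> \<sigma>)}"
      using Kr_meas[OF sp r0 r1] Pr_E[OF sp r0 r1] Pr_snd[OF sp r0 r1] D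
      by (auto simp: Let_def eq intro: ennreal_leI)
  qed
  also have "\<dots> = ennreal (1/2 * log 2 (1 / (1 - r\<^sup>2)))"
    unfolding eq Pr_MI[OF sp r0 r1] val_r[OF sp r0 r1] ..
  finally show ?thesis .
qed

lemma phi_0: "phi \<mu> \<sigma> 0 = \<top>"
proof -
  have "\<top> \<le> phi \<mu> \<sigma> 0"
    by (rule phi_ge) (use phi_lower_P0[OF sp] in auto)
  then show ?thesis by (simp add: top_unique)
qed

lemma phi_mid:
  assumes D0: "0 < D" and D1: "D < 2 * \<sigma>\<^sup>2"
  shows "phi \<mu> \<sigma> D = ennreal (1/2 * log 2 (4 * \<sigma>^4 / (4 * \<sigma>\<^sup>2 * D - D\<^sup>2)))"
proof (rule antisym)
  define r where "r = 1 - D / (2 * \<sigma>\<^sup>2)"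
  have r0: "0 \<le> r" "r < 1" using D0 D1 sp by (auto simp: r_def field_simps)
  have e1: "2 * \<sigma>\<^sup>2 * (1 - r) = D" using sp by (simp add: r_def)
  have e2: "1 / (1 - r\<^sup>2) = 4 * \<sigma>^4 / (4 * \<sigma>\<^sup>2 * D - D\<^sup>2)"
    unfolding r_def using sp by (simp add: field_simps power2_eq_square power4_eq_xxxx)
  show "phi \<mu> \<sigma> D \<le> ennreal (1/2 * log 2 (4 * \<sigma>^4 / (4 * \<sigma>\<^sup>2 * D - D\<^sup>2)))"
    using phi_le[OF r0, of D] e1 e2 by simp
  show "ennreal (1/2 * log 2 (4 * \<sigma>^4 / (4 * \<sigma>\<^sup>2 * D - D\<^sup>2))) \<le> phi \<mu> \<sigma> D"
    by (rule phi_ge) (use D0 D1 phi_lower_P[OF sp] in auto)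
qed

lemma phi_big:
  assumes D: "2 * \<sigma>\<^sup>2 \<le> D"
  shows "phi \<mu> \<sigma> D = 0"
  using phi_le[of 0 D] D by simp

end


lemma pw_var:
  fixes Q :: "real measure"
  assumes Qp: "prob_space Q" and sQ: "sets Q = sets borel"
  shows "ennreal ((x - (\<integral>y. y \<partial>Q))\<^sup>2) + (\<integral>\<^sup>+y. ennreal ((y - (\<integral>y. y \<partial>Q))\<^sup>2) \<partial>Q)
         \<le> (\<integral>\<^sup>+y. ennreal ((x - y)\<^sup>2) \<partial>Q)"
proof -
  interpret Q: prob_space Q by fact
  define m where "m = (\<integral>y. y \<partial>Q)"
  have [measurable]: "(\<lambda>y. y) \<in> borel_measurable Q" by (simp add: sQ cong: measurable_cong_sets)
  have [measurable]: "(\<lambda>y. f y) \<in> borel_measurable Q" if "f \<in> borel_measurable borel" for f :: "real \<Rightarrow> real"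
    using that by (simp add: sQ cong: measurable_cong_sets)
  show ?thesis
  proof (cases "integrable Q (\<lambda>y. (x - y)\<^sup>2)")
    case False
    have "(\<integral>\<^sup>+y. ennreal ((x - y)\<^sup>2) \<partial>Q) = \<top>"
    proof (rule ccontr)
      assume "(\<integral>\<^sup>+y. ennreal ((x - y)\<^sup>2) \<partial>Q) \<noteq> \<top>"
      then have "integrable Q (\<lambda>y. (x - y)\<^sup>2)" by (intro integrableI_nonneg) (auto simp: less_top)
      with False show False by simp
    qed
    then show ?thesis by (simp add: m_def[symmetric])
  next
    case True
    have i2: "integrable Q (\<lambda>y. y\<^sup>2)"
    proof (rule Bochner_Integration.integrable_bound[where f="\<lambda>y. 2 * (x - y)\<^sup>2 + 2 * x\<^sup>2"])
      show "integrable Q (\<lambda>y. 2 * (x - y)\<^sup>2 + 2 * x\<^sup>2)" using True by auto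
      show "(\<lambda>y. y\<^sup>2) \<in> borel_measurable Q" by simp
      show "AE y in Q. norm (y\<^sup>2) \<le> norm (2 * (x - y)\<^sup>2 + 2 * x\<^sup>2)"
      proof (intro AE_I2)
        fix y :: real
        have "y\<^sup>2 \<le> 2 * (x - y)\<^sup>2 + 2 * x\<^sup>2" using zero_le_power2[of "2*x - y"] by (simp add: power2_eq_square algebra_simps)
        then show "norm (y\<^sup>2) \<le> norm (2 * (x - y)\<^sup>2 + 2 * x\<^sup>2)" by simp
      qed
    qed
    have i1: "integrable Q (\<lambda>y. y)"
    proof (rule Bochner_Integration.integrable_bound[where f="\<lambda>y. 1 + y\<^sup>2"])
      show "integrable Q (\<lambda>y. 1 + y\<^sup>2)" using i2 by auto
      show "AE y in Q. norm y \<le> norm (1 + y\<^sup>2)"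
      proof (intro AE_I2)
        fix y :: real
        have a: "0 \<le> (\<bar>y\<bar> - 1)\<^sup>2" by simp
        have b: "(\<bar>y\<bar> - 1)\<^sup>2 = y * y - 2 * \<bar>y\<bar> + 1"
          by (simp add: power2_eq_square algebra_simps abs_mult_self_eq)
        have c: "0 \<le> y * y" by simp
        have "\<bar>y\<bar> \<le> 1 + y\<^sup>2" using a b c power2_eq_square[of y] by linarith
        then show "norm y \<le> norm (1 + y\<^sup>2)" by simp
      qed
    qed simp
    have id: "(\<lambda>y. (y - m)\<^sup>2) = (\<lambda>y. y\<^sup>2 - 2 * m * y + m\<^sup>2)" by (auto simp: fun_eq_iff power2_eq_square algebra_simps)
    have iv: "integrable Q (\<lambda>y. (y - m)\<^sup>2)" unfolding id using i1 i2 by auto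
    have idx: "(\<lambda>y. (x - y)\<^sup>2) = (\<lambda>y. (x - m)\<^sup>2 - 2 * (x - m) * (y - m) + (y - m)\<^sup>2)"
      by (auto simp: fun_eq_iff power2_eq_square algebra_simps)
    have "(\<integral>y. (x - y)\<^sup>2 \<partial>Q) = (x - m)\<^sup>2 - 2 * (x - m) * (\<integral>y. y - m \<partial>Q) + (\<integral>y. (y - m)\<^sup>2 \<partial>Q)"
      unfolding idx using i1 iv by (simp add: Q.prob_space)
    also have "(\<integral>y. y - m \<partial>Q) = 0" using i1 by (simp add: Q.prob_space m_def)
    finally have eq: "(\<integral>y. (x - y)\<^sup>2 \<partial>Q) = (x - m)\<^sup>2 + (\<integral>y. (y - m)\<^sup>2 \<partial>Q)" by simp
    have "(\<integral>\<^sup>+y. ennreal ((x - y)\<^sup>2) \<partial>Q) = ennreal ((x - m)\<^sup>2) + (\<integral>\<^sup>+y. ennreal ((y - m)\<^sup>2) \<partial>Q)"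
      using True iv eq by (simp add: nn_integral_eq_integral ennreal_plus integral_nonneg)
    then show ?thesis by (simp add: m_def)
  qed
qed


lemma space_borel_of: "space (borel_of T) = topspace T"
  unfolding borel_of_def by (rule space_measure_of) (auto dest: openin_subset)

lemma joint3_Pair: "joint3 \<mu> \<sigma> T K = gaussian \<mu> \<sigma> \<bind> (\<lambda>x. distr (K x) (borel \<Otimes>\<^sub>M (borel_of T \<Otimes>\<^sub>M borel)) (Pair x))"
proof -
  have "(\<lambda>(u, y). (x, u, y)) = Pair x" for x :: real by (auto simp: fun_eq_iff)
  then show ?thesis unfolding joint3_def by simp
qed

context
  fixes T :: "real topology" and K :: "real \<Rightarrow> (real \<times> real) measure" and \<mu> \<sigma> D :: real
  assumes sp: "\<sigma> > 0" and Dnn: "0 \<le> D"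
    and Km[measurable]: "K \<in> borel \<rightarrow>\<^sub>M prob_algebra (borel_of T \<Otimes>\<^sub>M borel)"
    and E: "(\<integral>\<^sup>+ z. ennreal ((fst z - snd (snd z))\<^sup>2) \<partial>(joint3 \<mu> \<sigma> T K)) \<le> ennreal D"
    and MC: "markov_chain borel (borel_of T) borel (joint3 \<mu> \<sigma> T K)"
    and MY: "distr (joint3 \<mu> \<sigma> T K) borel (\<lambda>z. snd (snd z)) = gaussian \<mu> \<sigma>"
begin

abbreviation "J3 \<equiv> joint3 \<mu> \<sigma> T K"
abbreviation "B \<equiv> borel_of T"

lemma J3_prob: "prob_space J3"
  unfolding joint3_Pair by (rule GB_prob[OF gaussian_prob[OF sp] _ Km]) simp

lemma J3_sets: "sets J3 = sets (borel \<Otimes>\<^sub>M (B \<Otimes>\<^sub>M borel))"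
  unfolding joint3_Pair by (rule GB_sets[OF gaussian_prob[OF sp] _ Km]) simp

lemma J3_fst: "distr J3 borel fst = gaussian \<mu> \<sigma>"
  unfolding joint3_Pair by (rule GB_fst[OF gaussian_prob[OF sp] _ Km]) simp

definition JXU where "JXU = distr J3 (borel \<Otimes>\<^sub>M B) (\<lambda>z. (fst z, fst (snd z)))"
definition JYU where "JYU = distr J3 (borel \<Otimes>\<^sub>M B) (\<lambda>z. (snd (snd z), fst (snd z)))"

lemma proj_meas[measurable]: "(\<lambda>z. (fst z, fst (snd z))) \<in> J3 \<rightarrow>\<^sub>M borel \<Otimes>\<^sub>M B"
  "(\<lambda>z. (snd (snd z), fst (snd z))) \<in> J3 \<rightarrow>\<^sub>M borel \<Otimes>\<^sub>M B"
  by (simp_all add: J3_sets cong: measurable_cong_sets)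

lemma JXU_facts: "prob_space JXU" "sets JXU = sets (borel \<Otimes>\<^sub>M B)" "distr JXU borel fst = gaussian \<mu> \<sigma>"
proof -
  interpret prob_space J3 by (rule J3_prob)
  show "prob_space JXU" unfolding JXU_def by (rule prob_space_distr) simp
  show "sets JXU = sets (borel \<Otimes>\<^sub>M B)" unfolding JXU_def by simp
  have "distr JXU borel fst = distr J3 borel (\<lambda>z. fst (fst z, fst (snd z)))"
    unfolding JXU_def by (subst distr_distr) (auto simp: comp_def)
  also have "\<dots> = gaussian \<mu> \<sigma>" using J3_fst by simp
  finally show "distr JXU borel fst = gaussian \<mu> \<sigma>" .
qed

lemma JYU_facts: "prob_space JYU" "sets JYU = sets (borel \<Otimes>\<^sub>M B)" "distr JYU borel fst = gaussian \<mu> \<sigma>"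
proof -
  interpret prob_space J3 by (rule J3_prob)
  show "prob_space JYU" unfolding JYU_def by (rule prob_space_distr) simp
  show "sets JYU = sets (borel \<Otimes>\<^sub>M B)" unfolding JYU_def by simp
  have "distr JYU borel fst = distr J3 borel (\<lambda>z. fst (snd (snd z), fst (snd z)))"
    unfolding JYU_def by (subst distr_distr) (auto simp: comp_def)
  also have "\<dots> = gaussian \<mu> \<sigma>" using MY by simp
  finally show "distr JYU borel fst = gaussian \<mu> \<sigma>" .
qed


lemma markov_nn:
  obtains q where "q \<in> B \<rightarrow>\<^sub>M prob_algebra borel"
    "\<And>F. F \<in> borel_measurable (borel \<Otimes>\<^sub>M (B \<Otimes>\<^sub>M borel)) \<Longrightarrow>
       (\<integral>\<^sup>+z. F z \<partial>J3) = (\<integral>\<^sup>+p. \<integral>\<^sup>+y. F (fst p, snd p, y) \<partial>q (snd p) \<partial>JXU)"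
proof -
  from MC obtain q where q[measurable]: "q \<in> B \<rightarrow>\<^sub>M prob_algebra borel"
    and meq: "J3 = distr J3 (borel \<Otimes>\<^sub>M B) (\<lambda>(x,u,y). (x,u)) \<bind>
             (\<lambda>(x,u). distr (q u) (borel \<Otimes>\<^sub>M (B \<Otimes>\<^sub>M borel)) (\<lambda>y. (x,u,y)))"
    unfolding markov_chain_def by blast
  have e1: "(\<lambda>(x::real,u::real,y::real). (x,u)) = (\<lambda>z. (fst z, fst (snd z)))" by (auto simp: fun_eq_iff)
  define L where "L p = distr (q (snd p)) (borel \<Otimes>\<^sub>M (B \<Otimes>\<^sub>M borel)) (\<lambda>y. (fst p, snd p, y))" for p :: "real \<times> real"
  have e2: "(\<lambda>(x,u). distr (q u) (borel \<Otimes>\<^sub>M (B \<Otimes>\<^sub>M borel)) (\<lambda>y. (x,u,y))) = L"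
    by (auto simp: fun_eq_iff L_def)
  have meq2: "J3 = JXU \<bind> L" using meq unfolding e1 e2 JXU_def .
  have Lm: "L \<in> (borel \<Otimes>\<^sub>M B) \<rightarrow>\<^sub>M prob_algebra (borel \<Otimes>\<^sub>M (B \<Otimes>\<^sub>M borel))"
    unfolding L_def by (rule measurable_distr_prob_space2[where M=borel]) measurable
  have Lm2: "L \<in> JXU \<rightarrow>\<^sub>M subprob_algebra (borel \<Otimes>\<^sub>M (B \<Otimes>\<^sub>M borel))"
    using measurable_prob_algebraD[OF Lm] by (simp add: JXU_facts cong: measurable_cong_sets)
  show ?thesis
  proof (rule that[OF q])
    fix F :: "real \<times> real \<times> real \<Rightarrow> ennreal"
    assume F[measurable]: "F \<in> borel_measurable (borel \<Otimes>\<^sub>M (B \<Otimes>\<^sub>M borel))"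
    have "(\<integral>\<^sup>+z. F z \<partial>J3) = (\<integral>\<^sup>+z. F z \<partial>(JXU \<bind> L))" using meq2 by (rule arg_cong)
    also have "\<dots> = (\<integral>\<^sup>+p. \<integral>\<^sup>+z. F z \<partial>L p \<partial>JXU)" by (rule nn_integral_bind[OF F Lm2])
    also have "\<dots> = (\<integral>\<^sup>+p. \<integral>\<^sup>+y. F (fst p, snd p, y) \<partial>q (snd p) \<partial>JXU)"
    proof (intro nn_integral_cong)
      fix p assume "p \<in> space JXU"
      moreover have "space JXU = space (borel \<Otimes>\<^sub>M B)" using JXU_facts(2) by (rule sets_eq_imp_space_eq)
      ultimately have p: "snd p \<in> space B" by (auto simp: space_pair_measure)
      have sq: "sets (q (snd p)) = sets borel"
        using measurable_space[OF q p] by (simp add: space_prob_algebra)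
      have "(\<lambda>y. (fst p, snd p, y)) \<in> q (snd p) \<rightarrow>\<^sub>M borel \<Otimes>\<^sub>M (B \<Otimes>\<^sub>M borel)"
        using p by (simp add: sq cong: measurable_cong_sets)
      then show "(\<integral>\<^sup>+z. F z \<partial>L p) = (\<integral>\<^sup>+y. F (fst p, snd p, y) \<partial>q (snd p))"
        unfolding L_def by (subst nn_integral_distr) auto
    qed
    finally show "(\<integral>\<^sup>+z. F z \<partial>J3) = (\<integral>\<^sup>+p. \<integral>\<^sup>+y. F (fst p, snd p, y) \<partial>q (snd p) \<partial>JXU)" .
  qed
qed

end


context
  fixes T :: "real topology" and K :: "real \<Rightarrow> (real \<times> real) measure" and \<mu> \<sigma> D :: real
  assumes sp: "\<sigma> > 0" and Dnn: "0 \<le> D"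
    and Km[measurable]: "K \<in> borel \<rightarrow>\<^sub>M prob_algebra (borel_of T \<Otimes>\<^sub>M borel)"
    and E: "(\<integral>\<^sup>+ z. ennreal ((fst z - snd (snd z))\<^sup>2) \<partial>(joint3 \<mu> \<sigma> T K)) \<le> ennreal D"
    and MC: "markov_chain borel (borel_of T) borel (joint3 \<mu> \<sigma> T K)"
    and MY: "distr (joint3 \<mu> \<sigma> T K) borel (\<lambda>z. snd (snd z)) = gaussian \<mu> \<sigma>"
begin

lemma varphi_split:
  obtains m E1 E2 where "m \<in> borel_measurable (borel_of T)"
    "integrable (JXU T K \<mu> \<sigma>) (\<lambda>z. (fst z - m (snd z))\<^sup>2)"
    "integrable (JYU T K \<mu> \<sigma>) (\<lambda>z. (fst z - m (snd z))\<^sup>2)"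
    "(\<integral>z. (fst z - m (snd z))\<^sup>2 \<partial>JXU T K \<mu> \<sigma>) + (\<integral>z. (fst z - m (snd z))\<^sup>2 \<partial>JYU T K \<mu> \<sigma>) \<le> D"
proof -
  note ctx = sp Dnn Km E MC MY
  let ?J3 = "joint3 \<mu> \<sigma> T K" and ?B = "borel_of T" and ?JXU = "JXU T K \<mu> \<sigma>" and ?JYU = "JYU T K \<mu> \<sigma>"
  obtain q where q[measurable]: "q \<in> ?B \<rightarrow>\<^sub>M prob_algebra borel"
    and mnn: "\<And>F. F \<in> borel_measurable (borel \<Otimes>\<^sub>M (?B \<Otimes>\<^sub>M borel)) \<Longrightarrow>
       (\<integral>\<^sup>+z. F z \<partial>?J3) = (\<integral>\<^sup>+p. \<integral>\<^sup>+y. F (fst p, snd p, y) \<partial>q (snd p) \<partial>?JXU)"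
    using markov_nn[OF ctx] by blast
  define m where "m u = (\<integral>y. y \<partial>q u)" for u
  have mm[measurable]: "m \<in> borel_measurable ?B"
    unfolding m_def
    by (rule measurable_compose[OF measurable_prob_algebraD[OF q] integral_measurable_subprob_algebra]) simp
  have sX: "sets ?JXU = sets (borel \<Otimes>\<^sub>M ?B)" and sY: "sets ?JYU = sets (borel \<Otimes>\<^sub>M ?B)"
    using JXU_facts(2)[OF ctx] JYU_facts(2)[OF ctx] .
  have spX: "space ?JXU = space (borel \<Otimes>\<^sub>M ?B)" using sX by (rule sets_eq_imp_space_eq)
  have sJ3: "sets ?J3 = sets (borel \<Otimes>\<^sub>M (?B \<Otimes>\<^sub>M borel))" by (rule J3_sets[OF ctx])
  have qsnd: "(\<lambda>p. q (snd p)) \<in> (borel \<Otimes>\<^sub>M ?B) \<rightarrow>\<^sub>M subprob_algebra borel"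
    by (rule measurable_compose[OF measurable_snd measurable_prob_algebraD[OF q]])
  have Vm: "(\<lambda>p. \<integral>\<^sup>+y. ennreal ((y - m (snd p))\<^sup>2) \<partial>q (snd p)) \<in> borel_measurable (borel \<Otimes>\<^sub>M ?B)"
    by (rule nn_integral_measurable_subprob_algebra2[OF _ qsnd]) measurable
  define I1 where "I1 = (\<integral>\<^sup>+p. ennreal ((fst p - m (snd p))\<^sup>2) \<partial>?JXU)"
  define I2 where "I2 = (\<integral>\<^sup>+w. ennreal ((fst w - m (snd w))\<^sup>2) \<partial>?JYU)"
  have I2eq: "I2 = (\<integral>\<^sup>+p. \<integral>\<^sup>+y. ennreal ((y - m (snd p))\<^sup>2) \<partial>q (snd p) \<partial>?JXU)"
  proof -
    have "I2 = (\<integral>\<^sup>+z. ennreal ((snd (snd z) - m (fst (snd z)))\<^sup>2) \<partial>?J3)"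
      unfolding I2_def JYU_def[OF ctx]
      by (subst nn_integral_distr) (auto simp: sJ3 cong: measurable_cong_sets)
    also have "\<dots> = (\<integral>\<^sup>+p. \<integral>\<^sup>+y. ennreal ((y - m (snd p))\<^sup>2) \<partial>q (snd p) \<partial>?JXU)"
      by (subst mnn) auto
    finally show ?thesis .
  qed
  have "I1 + I2 = (\<integral>\<^sup>+p. ennreal ((fst p - m (snd p))\<^sup>2) + \<integral>\<^sup>+y. ennreal ((y - m (snd p))\<^sup>2) \<partial>q (snd p) \<partial>?JXU)"
    unfolding I1_def I2eq
    by (rule nn_integral_add[symmetric]) (use Vm in \<open>auto simp: sX cong: measurable_cong_sets\<close>)
  also have "\<dots> \<le> (\<integral>\<^sup>+p. \<integral>\<^sup>+y. ennreal ((fst p - y)\<^sup>2) \<partial>q (snd p) \<partial>?JXU)"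
  proof (intro nn_integral_mono)
    fix p assume "p \<in> space ?JXU"
    then have p: "snd p \<in> space ?B" unfolding spX by (auto simp: space_pair_measure)
    have qp: "prob_space (q (snd p))" "sets (q (snd p)) = sets borel"
      using measurable_space[OF q p] by (simp_all add: space_prob_algebra)
    show "ennreal ((fst p - m (snd p))\<^sup>2) + (\<integral>\<^sup>+y. ennreal ((y - m (snd p))\<^sup>2) \<partial>q (snd p))
        \<le> (\<integral>\<^sup>+y. ennreal ((fst p - y)\<^sup>2) \<partial>q (snd p))"
      unfolding m_def by (rule pw_var[OF qp])
  qed
  also have "\<dots> = (\<integral>\<^sup>+z. ennreal ((fst z - snd (snd z))\<^sup>2) \<partial>?J3)"
    by (subst mnn) auto
  also have "\<dots> \<le> ennreal D" by (rule E)
  finally have sum: "I1 + I2 \<le> ennreal D" .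
  have f1: "I1 \<le> ennreal D" and f2: "I2 \<le> ennreal D" using sum by (auto intro: order_trans[OF _ sum])
  have i1: "integrable ?JXU (\<lambda>z. (fst z - m (snd z))\<^sup>2)"
    using f1 unfolding I1_def by (intro integrableI_nonneg) (auto simp: sX top_unique cong: measurable_cong_sets intro: le_less_trans)
  have i2: "integrable ?JYU (\<lambda>z. (fst z - m (snd z))\<^sup>2)"
    using f2 unfolding I2_def by (intro integrableI_nonneg) (auto simp: sY top_unique cong: measurable_cong_sets intro: le_less_trans)
  have "I1 = ennreal (\<integral>z. (fst z - m (snd z))\<^sup>2 \<partial>?JXU)"
    unfolding I1_def using i1 by (subst nn_integral_eq_integral) auto
  moreover have "I2 = ennreal (\<integral>z. (fst z - m (snd z))\<^sup>2 \<partial>?JYU)"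
    unfolding I2_def using i2 by (subst nn_integral_eq_integral) auto
  ultimately have "ennreal ((\<integral>z. (fst z - m (snd z))\<^sup>2 \<partial>?JXU) + (\<integral>z. (fst z - m (snd z))\<^sup>2 \<partial>?JYU)) \<le> ennreal D"
    using sum by (simp add: ennreal_plus integral_nonneg)
  then have "(\<integral>z. (fst z - m (snd z))\<^sup>2 \<partial>?JXU) + (\<integral>z. (fst z - m (snd z))\<^sup>2 \<partial>?JYU) \<le> D"
    using Dnn by (simp add: ennreal_le_iff del: ennreal_plus)
  then show ?thesis using that mm i1 i2 by blast
qed


lemma varphi_lower_pos:
  assumes D0: "0 < D"
  shows "ennreal (1/2 * log 2 (2 * \<sigma>\<^sup>2 / D)) \<le>
    max (mutual_info borel (borel_of T) (distr (joint3 \<mu> \<sigma> T K) (borel \<Otimes>\<^sub>M borel_of T) (\<lambda>z. (fst z, fst (snd z)))))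
        (mutual_info borel (borel_of T) (distr (joint3 \<mu> \<sigma> T K) (borel \<Otimes>\<^sub>M borel_of T) (\<lambda>z. (snd (snd z), fst (snd z)))))"
proof -
  note ctx = sp Dnn Km E MC MY
  obtain m where mm: "m \<in> borel_measurable (borel_of T)"
    and i1: "integrable (JXU T K \<mu> \<sigma>) (\<lambda>z. (fst z - m (snd z))\<^sup>2)"
    and i2: "integrable (JYU T K \<mu> \<sigma>) (\<lambda>z. (fst z - m (snd z))\<^sup>2)"
    and s: "(\<integral>z. (fst z - m (snd z))\<^sup>2 \<partial>JXU T K \<mu> \<sigma>) + (\<integral>z. (fst z - m (snd z))\<^sup>2 \<partial>JYU T K \<mu> \<sigma>) \<le> D"
    by (rule varphi_split)
  have c0: "D / 2 > 0" using D0 by simp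
  have eq: "\<sigma>\<^sup>2 / (D / 2) = 2 * \<sigma>\<^sup>2 / D" by simp
  show ?thesis
  proof (cases "(\<integral>z. (fst z - m (snd z))\<^sup>2 \<partial>JXU T K \<mu> \<sigma>) \<le> D / 2")
    case True
    have "ennreal (1/2 * log 2 (\<sigma>\<^sup>2 / (D / 2))) \<le> mutual_info borel (borel_of T) (JXU T K \<mu> \<sigma>)"
      by (rule GC1[OF sp JXU_facts(1,2,3)[OF ctx] mm i1 True c0])
    then show ?thesis unfolding eq JXU_def[OF ctx] by (rule order_trans) simp
  next
    case False
    then have E2: "(\<integral>z. (fst z - m (snd z))\<^sup>2 \<partial>JYU T K \<mu> \<sigma>) \<le> D / 2" using s by simp
    have "ennreal (1/2 * log 2 (\<sigma>\<^sup>2 / (D / 2))) \<le> mutual_info borel (borel_of T) (JYU T K \<mu> \<sigma>)"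
      by (rule GC1[OF sp JYU_facts(1,2,3)[OF ctx] mm i2 E2 c0])
    then show ?thesis unfolding eq JYU_def[OF ctx] by (rule order_trans) simp
  qed
qed

lemma varphi_lower_0:
  assumes D0: "D = 0"
  shows "max (mutual_info borel (borel_of T) (distr (joint3 \<mu> \<sigma> T K) (borel \<Otimes>\<^sub>M borel_of T) (\<lambda>z. (fst z, fst (snd z)))))
        (mutual_info borel (borel_of T) (distr (joint3 \<mu> \<sigma> T K) (borel \<Otimes>\<^sub>M borel_of T) (\<lambda>z. (snd (snd z), fst (snd z))))) = \<top>"
proof -
  note ctx = sp Dnn Km E MC MY
  obtain m where mm: "m \<in> borel_measurable (borel_of T)"
    and i1: "integrable (JXU T K \<mu> \<sigma>) (\<lambda>z. (fst z - m (snd z))\<^sup>2)"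
    and i2: "integrable (JYU T K \<mu> \<sigma>) (\<lambda>z. (fst z - m (snd z))\<^sup>2)"
    and s: "(\<integral>z. (fst z - m (snd z))\<^sup>2 \<partial>JXU T K \<mu> \<sigma>) + (\<integral>z. (fst z - m (snd z))\<^sup>2 \<partial>JYU T K \<mu> \<sigma>) \<le> D"
    by (rule varphi_split)
  have nn: "0 \<le> (\<integral>z. (fst z - m (snd z))\<^sup>2 \<partial>JYU T K \<mu> \<sigma>)" by (simp add: integral_nonneg)
  have E1: "(\<integral>z. (fst z - m (snd z))\<^sup>2 \<partial>JXU T K \<mu> \<sigma>) \<le> 0" using s D0 nn by linarith
  have "mutual_info borel (borel_of T) (JXU T K \<mu> \<sigma>) = \<top>"
    by (rule GC0[OF sp JXU_facts(1,2,3)[OF ctx] mm i1 E1])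
  then show ?thesis unfolding JXU_def[OF ctx] by simp
qed

end


lemma borel_of_euclidean: "borel_of (euclidean :: real topology) = borel"
  unfolding borel_of_def borel_def by simp

lemma polish_euclidean: "Polish_space (euclidean :: real topology)"
  unfolding Polish_space_def separable_space_def
  by (auto simp: completely_metrizable_space_euclidean countable_rat Rats_closure_real intro!: exI[of _ "\<rat>"])

definition Kr2 :: "real \<Rightarrow> real \<Rightarrow> real \<Rightarrow> real \<Rightarrow> (real \<times> real) measure" where
  "Kr2 \<mu> \<sigma> r x = Kr \<mu> \<sigma> r x \<bind> (\<lambda>u. distr (Kr \<mu> \<sigma> r u) (borel \<Otimes>\<^sub>M borel) (Pair u))"

context
  fixes \<mu> \<sigma> r :: real
  assumes sp: "\<sigma> > 0" and r0: "0 \<le> r" and r1: "r < 1"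
begin

lemma Kr2_meas[measurable]: "Kr2 \<mu> \<sigma> r \<in> borel \<rightarrow>\<^sub>M prob_algebra (borel \<Otimes>\<^sub>M borel)"
  unfolding Kr2_def
  by (rule measurable_bind_prob_space[OF Kr_meas[OF sp r0 r1] GB_kernel[OF gaussian_prob[OF sp, of \<mu>] _ Kr_meas[OF sp r0 r1]]]) simp

lemma Kr2_nn:
  assumes F[measurable]: "F \<in> borel_measurable (borel \<Otimes>\<^sub>M borel)"
  shows "(\<integral>\<^sup>+w. F w \<partial>Kr2 \<mu> \<sigma> r x) = (\<integral>\<^sup>+u. \<integral>\<^sup>+y. F (u, y) \<partial>Kr \<mu> \<sigma> r u \<partial>Kr \<mu> \<sigma> r x)"
  unfolding Kr2_def
  by (rule GB_nn[OF Kr_prob[OF sp r0 r1] _ Kr_meas[OF sp r0 r1] F]) (simp add: Kr_def)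

abbreviation "J3e \<equiv> joint3 \<mu> \<sigma> euclidean (Kr2 \<mu> \<sigma> r)"

lemma J3e_eq: "J3e = gaussian \<mu> \<sigma> \<bind> (\<lambda>x. distr (Kr2 \<mu> \<sigma> r x) (borel \<Otimes>\<^sub>M (borel \<Otimes>\<^sub>M borel)) (Pair x))"
  unfolding joint3_Pair borel_of_euclidean ..

lemma J3e_facts: "prob_space J3e" "sets J3e = sets (borel \<Otimes>\<^sub>M (borel \<Otimes>\<^sub>M borel))"
  unfolding J3e_eq
  by (rule GB_prob[OF gaussian_prob[OF sp] _ Kr2_meas] GB_sets[OF gaussian_prob[OF sp] _ Kr2_meas]; simp)+

lemma J3e_nn:
  assumes F[measurable]: "F \<in> borel_measurable (borel \<Otimes>\<^sub>M (borel \<Otimes>\<^sub>M borel))"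
  shows "(\<integral>\<^sup>+z. F z \<partial>J3e) = (\<integral>\<^sup>+x. \<integral>\<^sup>+u. \<integral>\<^sup>+y. F (x, u, y) \<partial>Kr \<mu> \<sigma> r u \<partial>Kr \<mu> \<sigma> r x \<partial>gaussian \<mu> \<sigma>)"
  unfolding J3e_eq
  by (subst GB_nn[OF gaussian_prob[OF sp] _ Kr2_meas F], simp) (simp add: Kr2_nn)


lemma Kr_sq: "(\<integral>\<^sup>+y. ennreal ((\<alpha> + \<beta> * y)\<^sup>2) \<partial>Kr \<mu> \<sigma> r u) = ennreal ((\<alpha> + \<beta> * (\<mu> + r * (u - \<mu>)))\<^sup>2 + \<beta>\<^sup>2 * (sr \<sigma> r)\<^sup>2)"
  unfolding Kr_def by (rule nn_integral_gauss_sq[OF sr_pos[OF sp r0 r1]])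

lemma J3e_E: "(\<integral>\<^sup>+z. ennreal ((fst z - snd (snd z))\<^sup>2) \<partial>J3e) = ennreal (2 * \<sigma>\<^sup>2 * (1 - r\<^sup>2))"
proof -
  define s where "s = sr \<sigma> r"
  have s2: "s\<^sup>2 = \<sigma>\<^sup>2 * (1 - r\<^sup>2)" unfolding s_def by (rule sr_sq[OF sp r0 r1])
  have Kp: "emeasure (gaussian m (sr \<sigma> r)) UNIV = 1" for m
    using prob_space.emeasure_space_1[OF gaussian_prob[OF sr_pos[OF sp r0 r1]]] by simp
  have Gp: "emeasure (gaussian \<mu> \<sigma>) UNIV = 1"
    using prob_space.emeasure_space_1[OF gaussian_prob[OF sp]] by simp
  have "(\<integral>\<^sup>+z. ennreal ((fst z - snd (snd z))\<^sup>2) \<partial>J3e) =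
     (\<integral>\<^sup>+x. \<integral>\<^sup>+u. \<integral>\<^sup>+y. ennreal ((x + (-1) * y)\<^sup>2) \<partial>Kr \<mu> \<sigma> r u \<partial>Kr \<mu> \<sigma> r x \<partial>gaussian \<mu> \<sigma>)"
    by (subst J3e_nn) auto
  also have "\<dots> = (\<integral>\<^sup>+x. \<integral>\<^sup>+u. ennreal (((x - \<mu> + r * \<mu>) + (- r) * u)\<^sup>2) + ennreal (s\<^sup>2) \<partial>Kr \<mu> \<sigma> r x \<partial>gaussian \<mu> \<sigma>)"
  proof (intro nn_integral_cong)
    fix x u
    have "(x + (-1) * (\<mu> + r * (u - \<mu>)))\<^sup>2 = ((x - \<mu> + r * \<mu>) + (- r) * u)\<^sup>2"
      by (simp add: algebra_simps power2_eq_square)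
    then show "(\<integral>\<^sup>+y. ennreal ((x + (-1) * y)\<^sup>2) \<partial>Kr \<mu> \<sigma> r u) = ennreal (((x - \<mu> + r * \<mu>) + (- r) * u)\<^sup>2) + ennreal (s\<^sup>2)"
      unfolding Kr_sq s_def by (simp add: ennreal_plus)
  qed
  also have "\<dots> = (\<integral>\<^sup>+x. ennreal ((- (1 - r\<^sup>2) * \<mu> + (1 - r\<^sup>2) * x)\<^sup>2) + ennreal (r\<^sup>2 * s\<^sup>2 + s\<^sup>2) \<partial>gaussian \<mu> \<sigma>)"
  proof (intro nn_integral_cong)
    fix x
    have "(\<integral>\<^sup>+u. ennreal (((x - \<mu> + r * \<mu>) + (- r) * u)\<^sup>2) + ennreal (s\<^sup>2) \<partial>Kr \<mu> \<sigma> r x) =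
        (\<integral>\<^sup>+u. ennreal (((x - \<mu> + r * \<mu>) + (- r) * u)\<^sup>2) \<partial>Kr \<mu> \<sigma> r x) + ennreal (s\<^sup>2)"
      by (subst nn_integral_add) (auto simp: Kr_def Kp)
    also have "\<dots> = ennreal (((x - \<mu> + r * \<mu>) + (- r) * (\<mu> + r * (x - \<mu>)))\<^sup>2 + (- r)\<^sup>2 * s\<^sup>2) + ennreal (s\<^sup>2)"
      unfolding Kr_sq s_def ..
    also have "((x - \<mu> + r * \<mu>) + (- r) * (\<mu> + r * (x - \<mu>)))\<^sup>2 = (- (1 - r\<^sup>2) * \<mu> + (1 - r\<^sup>2) * x)\<^sup>2"
      by (simp add: algebra_simps power2_eq_square)
    finally show "(\<integral>\<^sup>+u. ennreal (((x - \<mu> + r * \<mu>) + (- r) * u)\<^sup>2) + ennreal (s\<^sup>2) \<partial>Kr \<mu> \<sigma> r x) =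
       ennreal ((- (1 - r\<^sup>2) * \<mu> + (1 - r\<^sup>2) * x)\<^sup>2) + ennreal (r\<^sup>2 * s\<^sup>2 + s\<^sup>2)"
      by (simp add: ennreal_plus add.assoc)
  qed
  also have "\<dots> = (\<integral>\<^sup>+x. ennreal ((- (1 - r\<^sup>2) * \<mu> + (1 - r\<^sup>2) * x)\<^sup>2) \<partial>gaussian \<mu> \<sigma>) + ennreal (r\<^sup>2 * s\<^sup>2 + s\<^sup>2)"
    by (subst nn_integral_add) (auto simp: Gp)
  also have "\<dots> = ennreal ((- (1 - r\<^sup>2) * \<mu> + (1 - r\<^sup>2) * \<mu>)\<^sup>2 + (1 - r\<^sup>2)\<^sup>2 * \<sigma>\<^sup>2) + ennreal (r\<^sup>2 * s\<^sup>2 + s\<^sup>2)"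
    by (subst nn_integral_gauss_sq[OF sp]) simp
  also have "\<dots> = ennreal ((- (1 - r\<^sup>2) * \<mu> + (1 - r\<^sup>2) * \<mu>)\<^sup>2 + (1 - r\<^sup>2)\<^sup>2 * \<sigma>\<^sup>2 + (r\<^sup>2 * s\<^sup>2 + s\<^sup>2))"
    by (rule ennreal_plus[symmetric]) auto
  also have "(- (1 - r\<^sup>2) * \<mu> + (1 - r\<^sup>2) * \<mu>)\<^sup>2 + (1 - r\<^sup>2)\<^sup>2 * \<sigma>\<^sup>2 + (r\<^sup>2 * s\<^sup>2 + s\<^sup>2) = 2 * \<sigma>\<^sup>2 * (1 - r\<^sup>2)"
    unfolding s2 by (simp add: algebra_simps power2_eq_square)
  finally show ?thesis .
qed


lemma Kr_sets: "sets (Kr \<mu> \<sigma> r u) = sets borel" by (simp add: Kr_def)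

lemma J3e_emeasure_distr:
  assumes f[measurable]: "f \<in> (borel \<Otimes>\<^sub>M (borel \<Otimes>\<^sub>M borel)) \<rightarrow>\<^sub>M N" and A[measurable]: "A \<in> sets N"
  shows "emeasure (distr J3e N f) A = (\<integral>\<^sup>+x. \<integral>\<^sup>+u. \<integral>\<^sup>+y. indicator A (f (x, u, y)) \<partial>Kr \<mu> \<sigma> r u \<partial>Kr \<mu> \<sigma> r x \<partial>gaussian \<mu> \<sigma>)"
proof -
  have fm: "f \<in> J3e \<rightarrow>\<^sub>M N" using f by (simp add: J3e_facts cong: measurable_cong_sets)
  have "emeasure (distr J3e N f) A = (\<integral>\<^sup>+z. indicator A z \<partial>distr J3e N f)" using A by simp
  also have "\<dots> = (\<integral>\<^sup>+z. indicator A (f z) \<partial>J3e)" by (rule nn_integral_distr[OF fm]) simp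
  also have "\<dots> = (\<integral>\<^sup>+x. \<integral>\<^sup>+u. \<integral>\<^sup>+y. indicator A (f (x, u, y)) \<partial>Kr \<mu> \<sigma> r u \<partial>Kr \<mu> \<sigma> r x \<partial>gaussian \<mu> \<sigma>)"
    by (rule J3e_nn) simp
  finally show ?thesis .
qed

lemma Pr_emeasure:
  assumes A[measurable]: "A \<in> sets (borel \<Otimes>\<^sub>M borel)"
  shows "emeasure (Pr \<mu> \<sigma> r) A = (\<integral>\<^sup>+x. \<integral>\<^sup>+u. indicator A (x, u) \<partial>Kr \<mu> \<sigma> r x \<partial>gaussian \<mu> \<sigma>)"
proof -
  have "emeasure (Pr \<mu> \<sigma> r) A = (\<integral>\<^sup>+z. indicator A z \<partial>Pr \<mu> \<sigma> r)"
    using A by (simp add: Pr_GB[OF sp r0 r1])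
  also have "\<dots> = (\<integral>\<^sup>+x. \<integral>\<^sup>+u. indicator A (x, u) \<partial>Kr \<mu> \<sigma> r x \<partial>gaussian \<mu> \<sigma>)"
    by (rule Pr_nn1[OF sp r0 r1]) simp
  finally show ?thesis .
qed

lemma JXUe: "distr J3e (borel \<Otimes>\<^sub>M borel) (\<lambda>z. (fst z, fst (snd z))) = Pr \<mu> \<sigma> r"
proof (rule measure_eqI)
  show "sets (distr J3e (borel \<Otimes>\<^sub>M borel) (\<lambda>z. (fst z, fst (snd z)))) = sets (Pr \<mu> \<sigma> r)"
    by (simp add: Pr_GB[OF sp r0 r1])
  fix A assume "A \<in> sets (distr J3e (borel \<Otimes>\<^sub>M borel) (\<lambda>z. (fst z, fst (snd z))))"
  then have A[measurable]: "A \<in> sets (borel \<Otimes>\<^sub>M borel)" by simp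
  show "emeasure (distr J3e (borel \<Otimes>\<^sub>M borel) (\<lambda>z. (fst z, fst (snd z)))) A = emeasure (Pr \<mu> \<sigma> r) A"
    unfolding Pr_emeasure[OF A]
    by (subst J3e_emeasure_distr[OF _ A])
       (simp_all add: prob_space.emeasure_space_1[OF Kr_prob[OF sp r0 r1], simplified Kr_sets space_borel])
qed

lemma JYUe: "distr J3e (borel \<Otimes>\<^sub>M borel) (\<lambda>z. (snd (snd z), fst (snd z))) = Pr \<mu> \<sigma> r"
proof (rule measure_eqI)
  show "sets (distr J3e (borel \<Otimes>\<^sub>M borel) (\<lambda>z. (snd (snd z), fst (snd z)))) = sets (Pr \<mu> \<sigma> r)"
    by (simp add: Pr_GB[OF sp r0 r1])
  fix A assume "A \<in> sets (distr J3e (borel \<Otimes>\<^sub>M borel) (\<lambda>z. (snd (snd z), fst (snd z))))"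
  then have A[measurable]: "A \<in> sets (borel \<Otimes>\<^sub>M borel)" by simp
  have "emeasure (distr J3e (borel \<Otimes>\<^sub>M borel) (\<lambda>z. (snd (snd z), fst (snd z)))) A =
     (\<integral>\<^sup>+x. \<integral>\<^sup>+u. \<integral>\<^sup>+y. indicator A (y, u) \<partial>Kr \<mu> \<sigma> r u \<partial>Kr \<mu> \<sigma> r x \<partial>gaussian \<mu> \<sigma>)"
    by (subst J3e_emeasure_distr[OF _ A]) simp_all
  also have "\<dots> = (\<integral>\<^sup>+u. \<integral>\<^sup>+y. indicator A (y, u) \<partial>Kr \<mu> \<sigma> r u \<partial>gaussian \<mu> \<sigma>)"
  proof (rule Pr_stat[OF sp r0 r1])
    show "(\<lambda>u. \<integral>\<^sup>+y. indicator A (y, u) \<partial>Kr \<mu> \<sigma> r u) \<in> borel_measurable borel"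
      by (rule nn_integral_measurable_subprob_algebra2[OF _ measurable_prob_algebraD[OF Kr_meas[OF sp r0 r1]]]) measurable
  qed
  also have "\<dots> = (\<integral>\<^sup>+z. indicator A (snd z, fst z) \<partial>Pr \<mu> \<sigma> r)"
    by (subst Pr_nn1[OF sp r0 r1]) auto
  also have "\<dots> = (\<integral>\<^sup>+z. indicator A z \<partial>Pr \<mu> \<sigma> r)"
    by (rule Pr_swap[OF sp r0 r1]) simp
  also have "\<dots> = emeasure (Pr \<mu> \<sigma> r) A" using A by (simp add: Pr_GB[OF sp r0 r1])
  finally show "emeasure (distr J3e (borel \<Otimes>\<^sub>M borel) (\<lambda>z. (snd (snd z), fst (snd z)))) A = emeasure (Pr \<mu> \<sigma> r) A" .
qed

lemma MYe: "distr J3e borel (\<lambda>z. snd (snd z)) = gaussian \<mu> \<sigma>"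
proof (rule measure_eqI)
  show "sets (distr J3e borel (\<lambda>z. snd (snd z))) = sets (gaussian \<mu> \<sigma>)" by simp
  fix A assume "A \<in> sets (distr J3e borel (\<lambda>z. snd (snd z)))"
  then have A[measurable]: "A \<in> sets borel" by simp
  have "emeasure (distr J3e borel (\<lambda>z. snd (snd z))) A =
     (\<integral>\<^sup>+x. \<integral>\<^sup>+u. \<integral>\<^sup>+y. indicator A y \<partial>Kr \<mu> \<sigma> r u \<partial>Kr \<mu> \<sigma> r x \<partial>gaussian \<mu> \<sigma>)"
    by (subst J3e_emeasure_distr[OF _ A]) simp_all
  also have "\<dots> = (\<integral>\<^sup>+u. \<integral>\<^sup>+y. indicator A y \<partial>Kr \<mu> \<sigma> r u \<partial>gaussian \<mu> \<sigma>)"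
  proof (rule Pr_stat[OF sp r0 r1])
    show "(\<lambda>u. \<integral>\<^sup>+y. indicator A y \<partial>Kr \<mu> \<sigma> r u) \<in> borel_measurable borel"
      by (rule nn_integral_measurable_subprob_algebra2[OF _ measurable_prob_algebraD[OF Kr_meas[OF sp r0 r1]]]) measurable
  qed
  also have "\<dots> = (\<integral>\<^sup>+y. indicator A y \<partial>gaussian \<mu> \<sigma>)"
    by (rule Pr_stat[OF sp r0 r1]) simp
  also have "\<dots> = emeasure (gaussian \<mu> \<sigma>) A" using A by simp
  finally show "emeasure (distr J3e borel (\<lambda>z. snd (snd z))) A = emeasure (gaussian \<mu> \<sigma>) A" .
qed


lemma markov_e: "markov_chain borel (borel_of euclidean) borel J3e"
proof -
  define L where "L p = distr (Kr \<mu> \<sigma> r (snd p)) (borel \<Otimes>\<^sub>M (borel \<Otimes>\<^sub>M borel)) (\<lambda>y. (fst p, snd p, y))" for p :: "real \<times> real"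
  have e1: "(\<lambda>(x::real,u::real,y::real). (x,u)) = (\<lambda>z. (fst z, fst (snd z)))" by (auto simp: fun_eq_iff)
  have e2: "(\<lambda>(x,u). distr (Kr \<mu> \<sigma> r u) (borel \<Otimes>\<^sub>M (borel \<Otimes>\<^sub>M borel)) (\<lambda>y. (x,u,y))) = L"
    by (auto simp: fun_eq_iff L_def)
  have Lm: "L \<in> (borel \<Otimes>\<^sub>M borel) \<rightarrow>\<^sub>M prob_algebra (borel \<Otimes>\<^sub>M (borel \<Otimes>\<^sub>M borel))"
    unfolding L_def by (rule measurable_distr_prob_space2[where M=borel]) (rule measurable_compose[OF measurable_snd Kr_meas[OF sp r0 r1]], measurable)
  have Psp: "Pr \<mu> \<sigma> r \<in> space (prob_algebra (borel \<Otimes>\<^sub>M borel))"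
    by (simp add: space_prob_algebra Pr_GB[OF sp r0 r1])
  have eq: "J3e = Pr \<mu> \<sigma> r \<bind> L"
  proof (rule measure_eqI)
    show "sets J3e = sets (Pr \<mu> \<sigma> r \<bind> L)"
      by (simp add: J3e_facts sets_bind'[OF Psp Lm])
    fix A assume "A \<in> sets J3e"
    then have A[measurable]: "A \<in> sets (borel \<Otimes>\<^sub>M (borel \<Otimes>\<^sub>M borel))" by (simp add: J3e_facts)
    have "emeasure (Pr \<mu> \<sigma> r \<bind> L) A = (\<integral>\<^sup>+p. emeasure (L p) A \<partial>Pr \<mu> \<sigma> r)"
      by (rule emeasure_bind_prob_algebra[OF Psp Lm A])
    also have "\<dots> = (\<integral>\<^sup>+p. \<integral>\<^sup>+y. indicator A (fst p, snd p, y) \<partial>Kr \<mu> \<sigma> r (snd p) \<partial>Pr \<mu> \<sigma> r)"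
    proof (intro nn_integral_cong)
      fix p :: "real \<times> real"
      have m: "(\<lambda>y. (fst p, snd p, y)) \<in> Kr \<mu> \<sigma> r (snd p) \<rightarrow>\<^sub>M borel \<Otimes>\<^sub>M (borel \<Otimes>\<^sub>M borel)"
        by (simp add: Kr_sets cong: measurable_cong_sets)
      show "emeasure (L p) A = (\<integral>\<^sup>+y. indicator A (fst p, snd p, y) \<partial>Kr \<mu> \<sigma> r (snd p))"
      proof -
        have "emeasure (L p) A = (\<integral>\<^sup>+z. indicator A z \<partial>L p)" using A by (simp add: L_def)
        also have "\<dots> = (\<integral>\<^sup>+y. indicator A (fst p, snd p, y) \<partial>Kr \<mu> \<sigma> r (snd p))"
          unfolding L_def by (rule nn_integral_distr[OF m]) simp
        finally show ?thesis .
      qed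
    qed
    also have "\<dots> = (\<integral>\<^sup>+x. \<integral>\<^sup>+u. \<integral>\<^sup>+y. indicator A (x, u, y) \<partial>Kr \<mu> \<sigma> r u \<partial>Kr \<mu> \<sigma> r x \<partial>gaussian \<mu> \<sigma>)"
    proof (subst Pr_nn1[OF sp r0 r1])
      show "(\<lambda>p. \<integral>\<^sup>+y. indicator A (fst p, snd p, y) \<partial>Kr \<mu> \<sigma> r (snd p)) \<in> borel_measurable (borel \<Otimes>\<^sub>M borel)"
        by (rule nn_integral_measurable_subprob_algebra2[OF _ measurable_compose[OF measurable_snd measurable_prob_algebraD[OF Kr_meas[OF sp r0 r1]]]]) measurable
    qed simp
    also have "\<dots> = (\<integral>\<^sup>+z. indicator A z \<partial>J3e)"
      by (rule J3e_nn[symmetric]) simp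
    also have "\<dots> = emeasure J3e A" using A by (simp add: J3e_facts)
    finally show "emeasure J3e A = emeasure (Pr \<mu> \<sigma> r \<bind> L) A" ..
  qed
  show ?thesis
    unfolding markov_chain_def borel_of_euclidean
  proof (intro bexI[of _ "Kr \<mu> \<sigma> r"])
    show "Kr \<mu> \<sigma> r \<in> borel \<rightarrow>\<^sub>M prob_algebra borel" by (rule Kr_meas[OF sp r0 r1])
    have "distr J3e (borel \<Otimes>\<^sub>M borel) (\<lambda>(x, u, y). (x, u)) = Pr \<mu> \<sigma> r"
      unfolding e1 by (rule JXUe)
    then show "J3e = distr J3e (borel \<Otimes>\<^sub>M borel) (\<lambda>(x, u, y). (x, u)) \<bind>
        (\<lambda>(x, u). distr (Kr \<mu> \<sigma> r u) (borel \<Otimes>\<^sub>M (borel \<Otimes>\<^sub>M borel)) (\<lambda>y. (x, u, y)))"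
      unfolding e2 using eq by simp
  qed
qed

lemma varphi_le:
  assumes D: "2 * \<sigma>\<^sup>2 * (1 - r\<^sup>2) \<le> D"
  shows "varphi \<mu> \<sigma> D \<le> ennreal (1/2 * log 2 (1 / (1 - r\<^sup>2)))"
proof -
  have mem: "(euclidean, Kr2 \<mu> \<sigma> r) \<in> {(T :: real topology, K). Polish_space T \<and>
               K \<in> borel \<rightarrow>\<^sub>M prob_algebra (borel_of T \<Otimes>\<^sub>M (borel :: real measure)) \<and>
               (\<integral>\<^sup>+ z. ennreal ((fst z - snd (snd z))\<^sup>2) \<partial>(joint3 \<mu> \<sigma> T K)) \<le> ennreal D \<and>
               markov_chain borel (borel_of T) borel (joint3 \<mu> \<sigma> T K) \<and>
               distr (joint3 \<mu> \<sigma> T K) borel (\<lambda>z. snd (snd z)) = gaussian \<mu> \<sigma>}"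
    using polish_euclidean Kr2_meas J3e_E D markov_e MYe
    by (auto simp: borel_of_euclidean intro: ennreal_leI)
  have "varphi \<mu> \<sigma> D \<le> max (mutual_info borel (borel_of euclidean)
              (distr J3e (borel \<Otimes>\<^sub>M borel_of euclidean) (\<lambda>z. (fst z, fst (snd z)))))
           (mutual_info borel (borel_of euclidean)
              (distr J3e (borel \<Otimes>\<^sub>M borel_of euclidean) (\<lambda>z. (snd (snd z), fst (snd z)))))"
    unfolding varphi_def by (rule order_trans[OF INF_lower[OF mem]]) simp
  also have "\<dots> = ennreal (1/2 * log 2 (1 / (1 - r\<^sup>2)))"
    unfolding borel_of_euclidean JXUe JYUe Pr_MI[OF sp r0 r1] val_r[OF sp r0 r1] by simp
  finally show ?thesis .
qed

end


lemma varphi_ge: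
  fixes \<mu> \<sigma> D :: real
  assumes "\<And>(T :: real topology) K. Polish_space T \<Longrightarrow>
               K \<in> borel \<rightarrow>\<^sub>M prob_algebra (borel_of T \<Otimes>\<^sub>M (borel :: real measure)) \<Longrightarrow>
               (\<integral>\<^sup>+ z. ennreal ((fst z - snd (snd z))\<^sup>2) \<partial>(joint3 \<mu> \<sigma> T K)) \<le> ennreal D \<Longrightarrow>
               markov_chain borel (borel_of T) borel (joint3 \<mu> \<sigma> T K) \<Longrightarrow>
               distr (joint3 \<mu> \<sigma> T K) borel (\<lambda>z. snd (snd z)) = gaussian \<mu> \<sigma> \<Longrightarrow>
         Bd \<le> max (mutual_info borel (borel_of T)
              (distr (joint3 \<mu> \<sigma> T K) (borel \<Otimes>\<^sub>M borel_of T) (\<lambda>z. (fst z, fst (snd z)))))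
           (mutual_info borel (borel_of T)
              (distr (joint3 \<mu> \<sigma> T K) (borel \<Otimes>\<^sub>M borel_of T) (\<lambda>z. (snd (snd z), fst (snd z)))))"
  shows "Bd \<le> varphi \<mu> \<sigma> D"
  unfolding varphi_def
proof (rule INF_greatest)
  fix TK assume "TK \<in> {(T :: real topology, K). Polish_space T \<and>
               K \<in> borel \<rightarrow>\<^sub>M prob_algebra (borel_of T \<Otimes>\<^sub>M (borel :: real measure)) \<and>
               (\<integral>\<^sup>+ z. ennreal ((fst z - snd (snd z))\<^sup>2) \<partial>(joint3 \<mu> \<sigma> T K)) \<le> ennreal D \<and>
               markov_chain borel (borel_of T) borel (joint3 \<mu> \<sigma> T K) \<and>
               distr (joint3 \<mu> \<sigma> T K) borel (\<lambda>z. snd (snd z)) = gaussian \<mu> \<sigma>}"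
  then obtain T K where TK: "TK = (T, K)" and h: "Polish_space T"
      "K \<in> borel \<rightarrow>\<^sub>M prob_algebra (borel_of T \<Otimes>\<^sub>M (borel :: real measure))"
      "(\<integral>\<^sup>+ z. ennreal ((fst z - snd (snd z))\<^sup>2) \<partial>(joint3 \<mu> \<sigma> T K)) \<le> ennreal D"
      "markov_chain borel (borel_of T) borel (joint3 \<mu> \<sigma> T K)"
      "distr (joint3 \<mu> \<sigma> T K) borel (\<lambda>z. snd (snd z)) = gaussian \<mu> \<sigma>"
    by auto
  show "Bd \<le> max (mutual_info borel (borel_of (fst TK))
              (distr (joint3 \<mu> \<sigma> (fst TK) (snd TK)) (borel \<Otimes>\<^sub>M borel_of (fst TK)) (\<lambda>z. (fst z, fst (snd z)))))
           (mutual_info borel (borel_of (fst TK))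
              (distr (joint3 \<mu> \<sigma> (fst TK) (snd TK)) (borel \<Otimes>\<^sub>M borel_of (fst TK)) (\<lambda>z. (snd (snd z), fst (snd z)))))"
    unfolding TK using assms[OF h] by simp
qed

theorem theorem8:
  fixes \<mu> \<sigma> :: real
  assumes "\<sigma> > 0"
  shows "(phi \<mu> \<sigma> 0 = \<infinity> \<and> varphi \<mu> \<sigma> 0 = \<infinity>) \<and>
         (\<forall>D. 0 < D \<and> D < 2 * \<sigma>\<^sup>2 \<longrightarrow>
            phi \<mu> \<sigma> D = ennreal (1/2 * log 2 (4 * \<sigma>^4 / (4 * \<sigma>\<^sup>2 * D - D\<^sup>2))) \<and>
            varphi \<mu> \<sigma> D = ennreal (1/2 * log 2 (2 * \<sigma>\<^sup>2 / D))) \<and>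
         (\<forall>D. 2 * \<sigma>\<^sup>2 \<le> D \<longrightarrow> phi \<mu> \<sigma> D = 0 \<and> varphi \<mu> \<sigma> D = 0)"
proof (intro conjI allI impI)
  note sp = assms
  show "phi \<mu> \<sigma> 0 = \<infinity>" using phi_0[OF sp] by simp
  have "\<top> \<le> varphi \<mu> \<sigma> 0"
  proof (rule varphi_ge)
    fix T :: "real topology" and K assume h: "Polish_space T"
      "K \<in> borel \<rightarrow>\<^sub>M prob_algebra (borel_of T \<Otimes>\<^sub>M (borel :: real measure))"
      "(\<integral>\<^sup>+ z. ennreal ((fst z - snd (snd z))\<^sup>2) \<partial>(joint3 \<mu> \<sigma> T K)) \<le> ennreal 0"
      "markov_chain borel (borel_of T) borel (joint3 \<mu> \<sigma> T K)"
      "distr (joint3 \<mu> \<sigma> T K) borel (\<lambda>z. snd (snd z)) = gaussian \<mu> \<sigma>"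
    show "\<top> \<le> max (mutual_info borel (borel_of T)
              (distr (joint3 \<mu> \<sigma> T K) (borel \<Otimes>\<^sub>M borel_of T) (\<lambda>z. (fst z, fst (snd z)))))
           (mutual_info borel (borel_of T)
              (distr (joint3 \<mu> \<sigma> T K) (borel \<Otimes>\<^sub>M borel_of T) (\<lambda>z. (snd (snd z), fst (snd z)))))"
      using varphi_lower_0[OF sp order.refl h(2,3,4,5) refl] by simp
  qed
  then show "varphi \<mu> \<sigma> 0 = \<infinity>" by (simp add: top_unique)
next
  fix D :: real assume D: "0 < D \<and> D < 2 * \<sigma>\<^sup>2"
  show "phi \<mu> \<sigma> D = ennreal (1/2 * log 2 (4 * \<sigma>^4 / (4 * \<sigma>\<^sup>2 * D - D\<^sup>2)))"
    using phi_mid[OF assms] D by simp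
  show "varphi \<mu> \<sigma> D = ennreal (1/2 * log 2 (2 * \<sigma>\<^sup>2 / D))"
  proof (rule antisym)
    define r where "r = sqrt (1 - D / (2 * \<sigma>\<^sup>2))"
    have q: "0 \<le> 1 - D / (2 * \<sigma>\<^sup>2)" "1 - D / (2 * \<sigma>\<^sup>2) < 1" using D assms by (auto simp: field_simps)
    have r0: "0 \<le> r" "r < 1" using q by (auto simp: r_def)
    have r2: "r\<^sup>2 = 1 - D / (2 * \<sigma>\<^sup>2)" using q by (simp add: r_def)
    have e1: "2 * \<sigma>\<^sup>2 * (1 - r\<^sup>2) = D" using assms by (simp add: r2)
    have e2: "1 / (1 - r\<^sup>2) = 2 * \<sigma>\<^sup>2 / D" using assms D by (simp add: r2)
    show "varphi \<mu> \<sigma> D \<le> ennreal (1/2 * log 2 (2 * \<sigma>\<^sup>2 / D))"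
      using varphi_le[OF assms r0, of D] e1 e2 by simp
    show "ennreal (1/2 * log 2 (2 * \<sigma>\<^sup>2 / D)) \<le> varphi \<mu> \<sigma> D"
    proof (rule varphi_ge)
      fix T :: "real topology" and K assume h: "Polish_space T"
        "K \<in> borel \<rightarrow>\<^sub>M prob_algebra (borel_of T \<Otimes>\<^sub>M (borel :: real measure))"
        "(\<integral>\<^sup>+ z. ennreal ((fst z - snd (snd z))\<^sup>2) \<partial>(joint3 \<mu> \<sigma> T K)) \<le> ennreal D"
        "markov_chain borel (borel_of T) borel (joint3 \<mu> \<sigma> T K)"
        "distr (joint3 \<mu> \<sigma> T K) borel (\<lambda>z. snd (snd z)) = gaussian \<mu> \<sigma>"
      have Dn: "0 \<le> D" using D by simp
      show "ennreal (1/2 * log 2 (2 * \<sigma>\<^sup>2 / D)) \<le> max (mutual_info borel (borel_of T)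
              (distr (joint3 \<mu> \<sigma> T K) (borel \<Otimes>\<^sub>M borel_of T) (\<lambda>z. (fst z, fst (snd z)))))
           (mutual_info borel (borel_of T)
              (distr (joint3 \<mu> \<sigma> T K) (borel \<Otimes>\<^sub>M borel_of T) (\<lambda>z. (snd (snd z), fst (snd z)))))"
        using varphi_lower_pos[OF assms Dn h(2,3,4,5)] D by simp
    qed
  qed
next
  fix D :: real assume D: "2 * \<sigma>\<^sup>2 \<le> D"
  show "phi \<mu> \<sigma> D = 0" using phi_big[OF assms D] .
  show "varphi \<mu> \<sigma> D = 0"
  proof -
    have "varphi \<mu> \<sigma> D \<le> ennreal (1/2 * log 2 (1 / (1 - 0\<^sup>2)))"
      by (rule varphi_le[OF assms]) (use D in auto)
    then show ?thesis by simp
  qed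
qed


end
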